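(* Let $k$ be a positive integer, $N$ a positive integer, $0=t_0<t_1<\dots<t_N=1$, $p_0,\ldots,p_N\in\mathbb{R}$, $v_1,\ldots,v_{k-1}\in\mathbb{R}$ and $j\in\{0,\ldots,N\}$. Let \[ \Gamma_k=\{\gamma\in H^k([0,1],\mathbb{R}):\ \gamma(t_i)=p_i\ \forall i=0,\ldots,N,\ \gamma^{(\ell)}(t_j)=v_\ell\ \forall\ell=1,\ldots,k-1\},\qquad f_k(\gamma)=\int_0^1|\gamma^{(k)}(t)|^2\,\mathrm{d}t. \] Let $\gamma\in\Gamma_k$ be a critical point of $f_k$, i.e. $\int_0^1\gamma^{(k)}(t)\xi^{(k)}(t)\,\mathrm{d}t=0$ for every $\xi\in V_k=\{\xi\in H^k([0,1],\mathbb{R}):\ \xi(t_i)=0\ \forall i=0,\ldots,N,\ \xi^{(\ell)}(t_j)=0\ \forall\ell=1,\ldots,k-1\}$. Then for every $i=1,\ldots,N$ the restriction $\gamma|_{[t_{i-1},t_i]}$ is smooth and $\frac{\mathrm{d}^{2k}}{\mathrm{d}t^{2k}}\gamma(t)=0$ for all $t\in[t_{i-1},t_i]$. Moreover, both $\gamma|_{[0,t_j]}$ and $\gamma|_{[t_j,1]}$ are of class $C^{2k-2}$; if $t_j\neq0$ then $\gamma^{(k+\ell-1)}(0)=0$ for every $\ell=1,\ldots,k-1$, and if $t_j\neq1$ then $\gamma^{(k+\ell-1)}(1)=0$ for every $\ell=1,\ldots,k-1$.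
   Context: $H^k([0,1],\mathbb{R})$ is the Sobolev space of real functions on $[0,1]$ with $k$-th weak derivative in $L^2$; $\gamma^{(\ell)}$ denotes the $\ell$-th derivative. Derivatives of $\gamma|_{[t_{i-1},t_i]}$ at the endpoints are one-sided. *)

theory Defs
  imports "HOL-Analysis.Analysis"
begin

fun ider :: "nat \<Rightarrow> real set \<Rightarrow> (real \<Rightarrow> real) \<Rightarrow> real \<Rightarrow> real" where
  "ider 0 S f = f"
| "ider (Suc n) S f = (\<lambda>x. vector_derivative (ider n S f) (at x within S))"

definition Ck_on :: "nat \<Rightarrow> real set \<Rightarrow> (real \<Rightarrow> real) \<Rightarrow> bool" where
  "Ck_on m S f \<longleftrightarrow>
     (\<forall>n<m. \<forall>x\<in>S. (ider n S f has_vector_derivative ider (Suc n) S f x) (at x within S))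
     \<and> continuous_on S (ider m S f)"

definition smooth_on :: "real set \<Rightarrow> (real \<Rightarrow> real) \<Rightarrow> bool" where
  "smooth_on S f \<longleftrightarrow> (\<forall>m. Ck_on m S f)"

text \<open>Sobolev space H^k([0,1]) (canonical, i.e. C^(k-1), representatives):
  gamma and its derivatives g l (l < k) are iterated primitives, and the k-th (weak)
  derivative g k lies in L^2([0,1]).\<close>
definition sobolev_H :: "nat \<Rightarrow> (real \<Rightarrow> real) set" where
  "sobolev_H k = {\<gamma>. \<exists>g::nat \<Rightarrow> real \<Rightarrow> real.
      (\<forall>t\<in>{0..1}. g 0 t = \<gamma> t)
    \<and> (\<forall>l<k. \<forall>t\<in>{0..1}. (g (Suc l) has_integral (g l t - g l 0)) {0..t})
    \<and> g k absolutely_integrable_on {0..1}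
    \<and> (\<lambda>t. (g k t)\<^sup>2) integrable_on {0..1}}"

abbreviation D01 :: "nat \<Rightarrow> (real \<Rightarrow> real) \<Rightarrow> real \<Rightarrow> real" where
  "D01 l f \<equiv> ider l {0..1} f"

definition Gamma_k :: "nat \<Rightarrow> nat \<Rightarrow> (nat \<Rightarrow> real) \<Rightarrow> (nat \<Rightarrow> real) \<Rightarrow> (nat \<Rightarrow> real) \<Rightarrow> nat
    \<Rightarrow> (real \<Rightarrow> real) set" where
  "Gamma_k k N t p v j = {\<gamma> \<in> sobolev_H k. (\<forall>i\<le>N. \<gamma> (t i) = p i)
       \<and> (\<forall>l\<in>{1..k-1}. D01 l \<gamma> (t j) = v l)}"

definition V_k :: "nat \<Rightarrow> nat \<Rightarrow> (nat \<Rightarrow> real) \<Rightarrow> nat \<Rightarrow> (real \<Rightarrow> real) set" where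
  "V_k k N t j = {\<xi> \<in> sobolev_H k. (\<forall>i\<le>N. \<xi> (t i) = 0)
       \<and> (\<forall>l\<in>{1..k-1}. D01 l \<xi> (t j) = 0)}"

end

theory Submission
  imports Defs
begin


definition badpt :: "real \<Rightarrow> (real \<Rightarrow> real) \<Rightarrow> real \<Rightarrow> real \<Rightarrow> real \<Rightarrow> bool" where
  "badpt e f a b x \<longleftrightarrow> (\<forall>d>0. \<exists>u v. a \<le> u \<and> u \<le> x \<and> x \<le> v \<and> v \<le> b \<and> u < v \<and> v - u < d
      \<and> e * (v - u) \<le> \<bar>integral {u..v} f - f x * (v - u)\<bar>)"

lemma negligible_badpt:
  fixes f :: "real \<Rightarrow> real"
  assumes f: "f integrable_on {a..b}" and e: "e > 0"
  shows "negligible {x. badpt e f a b x}"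
proof -
  define S where "S = {x. badpt e f a b x}"
  have "\<exists>T. S \<subseteq> T \<and> T \<in> lmeasurable \<and> measure lebesgue T \<le> \<eta>" if "\<eta> > 0" for \<eta>
  proof -
    have fc: "f integrable_on cbox a b" using f by simp
    obtain g where g: "gauge g" and gs: "\<And>p. \<lbrakk>p tagged_partial_division_of (cbox a b); g fine p\<rbrakk> \<Longrightarrow>
             sum (\<lambda>(x,k). norm(Henstock_Kurzweil_Integration.content k *\<^sub>R f x - integral k f)) p < e * \<eta>"
      using Henstock_lemma[OF fc, of "e * \<eta>"] e \<open>\<eta> > 0\<close> by auto
    have "\<exists>d>0. ball x d \<subseteq> g x" for x
      using g unfolding gauge_def by (meson open_contains_ball)
    then obtain dd where dd: "\<And>x. dd x > 0" "\<And>x. ball x (dd x) \<subseteq> g x" by metis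
    define K where "K = {(x,u,v). x \<in> S \<and> a \<le> u \<and> u \<le> x \<and> x \<le> v \<and> v \<le> b \<and> u < v \<and> v - u < dd x
      \<and> e * (v - u) \<le> \<bar>integral {u..v} f - f x * (v - u)\<bar>}"
    define cen :: "real \<times> real \<times> real \<Rightarrow> real" where "cen = (\<lambda>(x,u,v). (u + v) / 2)"
    define rad :: "real \<times> real \<times> real \<Rightarrow> real" where "rad = (\<lambda>(x,u,v). (v - u) / 2)"
    have cb: "cball (cen i) (rad i) = {fst (snd i)..snd (snd i)}" for i
      by (cases i) (auto simp: cen_def rad_def cball_eq_atLeastAtMost field_simps)
    have r: "\<And>i. i \<in> K \<Longrightarrow> 0 < rad i" by (auto simp: K_def rad_def)
    have cov: "\<exists>i. i \<in> K \<and> x \<in> cball (cen i) (rad i) \<and> rad i < d" if "x \<in> S" "0 < d" for x d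
    proof -
      have "badpt e f a b x" using that S_def by auto
      moreover have "min d (dd x) > 0" using dd(1)[of x] \<open>0 < d\<close> by simp
      ultimately obtain u v where uv: "a \<le> u" "u \<le> x" "x \<le> v" "v \<le> b" "u < v" "v - u < min d (dd x)"
         "e * (v - u) \<le> \<bar>integral {u..v} f - f x * (v - u)\<bar>"
        unfolding badpt_def by blast
      show ?thesis
      proof (intro exI conjI)
        show "(x,u,v) \<in> K" using uv that by (auto simp: K_def)
        show "x \<in> cball (cen (x,u,v)) (rad (x,u,v))" using uv by (simp only: cb) simp
        show "rad (x,u,v) < d" using uv by (simp add: rad_def)
      qed
    qed
    obtain C where C: "countable C" "C \<subseteq> K"
      and pw: "pairwise (\<lambda>i j. disjnt (cball (cen i) (rad i)) (cball (cen j) (rad j))) C"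
      and neg: "negligible (S - (\<Union>i\<in>C. cball (cen i) (rad i)))"
      using Vitali_covering_theorem_cballs[of K rad S cen, OF r cov] by blast
    define D where "D = (\<lambda>i. cball (cen i) (rad i)) ` C"
    have finbound: "sum (\<lambda>i. 2 * rad i) C' \<le> \<eta>" if "C' \<subseteq> C" "finite C'" for C'
    proof -
      define p where "p = (\<lambda>(x,u,v). (x, {u..v})) ` C'"
      have inj: "inj_on (\<lambda>(x::real,u::real,v::real). (x, {u..v})) C'"
      proof (rule inj_onI)
        fix i j assume ij: "i \<in> C'" "j \<in> C'" "(case i of (x, u, v) \<Rightarrow> (x, {u..v})) = (case j of (x, u, v) \<Rightarrow> (x, {u..v}))"
        have "i \<in> K" "j \<in> K" using ij that C by auto
        then show "i = j" using ij(3) by (cases i; cases j) (auto simp: K_def)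
      qed
      have pdiv: "p tagged_partial_division_of (cbox a b)"
        unfolding tagged_partial_division_of_def
      proof (intro conjI allI impI)
        show "finite p" using that p_def by auto
      next
        fix x k assume "(x, k) \<in> p"
        then obtain u v where "(x,u,v) \<in> C'" "k = {u..v}" by (auto simp: p_def)
        then have "(x,u,v) \<in> K" using that C by auto
        then show "x \<in> k" "k \<subseteq> cbox a b" "\<exists>a b. k = cbox a b"
          using \<open>k = {u..v}\<close> by (auto simp: K_def box_real)
      next
        fix x1 k1 x2 k2 assume h: "(x1, k1) \<in> p \<and> (x2, k2) \<in> p \<and> (x1, k1) \<noteq> (x2, k2)"
        then obtain u1 v1 u2 v2 where i: "(x1,u1,v1) \<in> C'" "k1 = {u1..v1}" "(x2,u2,v2) \<in> C'" "k2 = {u2..v2}"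
          by (auto simp: p_def)
        then have "(x1,u1,v1) \<noteq> (x2,u2,v2)" using h by auto
        then have "disjnt (cball (cen (x1,u1,v1)) (rad (x1,u1,v1))) (cball (cen (x2,u2,v2)) (rad (x2,u2,v2)))"
          using pw i that unfolding pairwise_def by blast
        then have "k1 \<inter> k2 = {}" using i by (simp add: cb disjnt_def)
        then show "interior k1 \<inter> interior k2 = {}" using interior_subset by blast
      qed
      have fine0: "\<forall>x k. (x, k) \<in> p \<longrightarrow> k \<subseteq> g x"
      proof (intro allI impI)
        fix x k assume "(x, k) \<in> p"
        then obtain u v where "(x,u,v) \<in> C'" "k = {u..v}" by (auto simp: p_def)
        then have "(x,u,v) \<in> K" using that C by auto
        then have "{u..v} \<subseteq> ball x (dd x)" by (auto simp: K_def dist_real_def)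
        then show "k \<subseteq> g x" using dd(2)[of x] \<open>k = {u..v}\<close> by auto
      qed
      have fine: "g fine p" using fine0 by (auto simp: fine_def)
      have "e * sum (\<lambda>i. 2 * rad i) C' = sum (\<lambda>(x,u,v). e * (v - u)) C'"
        unfolding sum_distrib_left by (intro sum.cong refl) (auto simp: rad_def split: prod.splits)
      also have "\<dots> \<le> sum (\<lambda>(x,u,v). norm (Henstock_Kurzweil_Integration.content {u..v} *\<^sub>R f x - integral {u..v} f)) C'"
      proof (rule sum_mono)
        fix i assume "i \<in> C'"
        then have "i \<in> K" using that C by auto
        then show "(case i of (x, u, v) \<Rightarrow> e * (v - u)) \<le> (case i of (x, u, v) \<Rightarrow> norm (Henstock_Kurzweil_Integration.content {u..v} *\<^sub>R f x - integral {u..v} f))"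
        proof (cases i)
          case (fields x u v)
          then have h: "e * (v - u) \<le> \<bar>integral {u..v} f - f x * (v - u)\<bar>" "u < v"
            using \<open>i \<in> K\<close> by (auto simp: K_def)
          have "\<bar>integral {u..v} f - f x * (v - u)\<bar> = norm (Henstock_Kurzweil_Integration.content {u..v} *\<^sub>R f x - integral {u..v} f)"
            using h(2) by (simp add: abs_minus_commute mult.commute)
          then show ?thesis using h fields by simp
        qed
      qed
      also have "\<dots> = sum (\<lambda>(x,k). norm(Henstock_Kurzweil_Integration.content k *\<^sub>R f x - integral k f)) p"
        unfolding p_def by (subst sum.reindex[OF inj]) (simp add: split_def)
      also have "\<dots> < e * \<eta>" using gs[OF pdiv fine] .
      finally show ?thesis using e by simp
    qed
    have Dm: "\<And>d. d \<in> D \<Longrightarrow> d \<in> fmeasurable lebesgue" by (auto simp: D_def)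
    have Db: "measure lebesgue (\<Union>E) \<le> \<eta>" if "E \<subseteq> D" "finite E" for E
    proof -
      obtain C' where C': "C' \<subseteq> C" "finite C'" "E = (\<lambda>i. cball (cen i) (rad i)) ` C'"
        using finite_subset_image[OF \<open>finite E\<close>] \<open>E \<subseteq> D\<close> unfolding D_def by blast
      have "measure lebesgue (\<Union>E) \<le> (\<Sum>i\<in>C'. measure lebesgue (cball (cen i) (rad i)))"
        unfolding C' by (rule measure_UNION_le) (auto simp: C')
      also have "\<dots> = (\<Sum>i\<in>C'. 2 * rad i)"
      proof (rule sum.cong[OF refl])
        fix i assume "i \<in> C'" then have "i \<in> K" using C' C by auto
        have "measure lebesgue (cball (cen i) (rad i)) = measure lebesgue {fst (snd i)..snd(snd i)}"
          by (simp only: cb)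
        also have "\<dots> = 2 * rad i" using \<open>i \<in> K\<close> by (cases i) (auto simp: K_def rad_def)
        finally show "measure lebesgue (cball (cen i) (rad i)) = 2 * rad i" .
      qed
      also have "\<dots> \<le> \<eta>" using finbound C' by auto
      finally show ?thesis .
    qed
    have UD: "\<Union>D \<in> fmeasurable lebesgue" "measure lebesgue (\<Union>D) \<le> \<eta>"
      using fmeasurable_Union_bound[of D lebesgue \<eta>] measure_Union_bound[of D lebesgue \<eta>] Dm Db C(1)
      unfolding D_def by auto
    define N where "N = S - (\<Union>i\<in>C. cball (cen i) (rad i))"
    have Nn: "negligible N" using neg N_def by simp
    show ?thesis
    proof (intro exI conjI)
      show "S \<subseteq> \<Union>D \<union> N" by (auto simp: N_def D_def)
      show "\<Union>D \<union> N \<in> lmeasurable" using UD Nn by (simp add: fmeasurable.Un negligible_imp_measurable)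
      have "measure lebesgue (\<Union>D \<union> N) \<le> measure lebesgue (\<Union>D) + measure lebesgue N"
        by (rule measure_Un_le) (use UD Nn negligible_imp_sets in auto)
      also have "measure lebesgue N = 0" using Nn negligible_imp_measure0 by blast
      finally show "measure lebesgue (\<Union>D \<union> N) \<le> \<eta>" using UD by simp
    qed
  qed
  then show ?thesis unfolding S_def[symmetric] negligible_outer_le by blast
qed

lemma not_badpt_deriv:
  fixes f :: "real \<Rightarrow> real"
  assumes f: "f integrable_on {a..b}" and x: "a < x" "x < b"
    and nb: "\<And>n. \<not> badpt (1 / Suc n) f a b x"
  shows "((\<lambda>t. integral {a..t} f) has_real_derivative f x) (at x)"
  unfolding has_field_derivative_iff tendsto_iff
proof (intro allI impI)
  fix \<epsilon> :: real assume "\<epsilon> > 0"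
  obtain n :: nat where n: "1 / Suc n < \<epsilon>"
    using \<open>\<epsilon> > 0\<close> by (metis nat_approx_posE)
  define e where "e = 1 / real (Suc n)"
  have "e > 0" by (simp add: e_def)
  from nb[of n] obtain d where d: "d > 0" and
    dP: "\<And>u v. a \<le> u \<Longrightarrow> u \<le> x \<Longrightarrow> x \<le> v \<Longrightarrow> v \<le> b \<Longrightarrow> u < v \<Longrightarrow> v - u < d \<Longrightarrow>
        \<bar>integral {u..v} f - f x * (v - u)\<bar> < e * (v - u)"
    unfolding badpt_def e_def by (meson not_le)
  define d' where "d' = min d (min (x - a) (b - x))"
  have "d' > 0" using d x by (simp add: d'_def)
  show "\<forall>\<^sub>F y in at x. dist ((integral {a..y} f - integral {a..x} f) / (y - x)) (f x) < \<epsilon>"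
    unfolding eventually_at
  proof (intro exI conjI ballI impI allI)
    show "d' > 0" by fact
    fix y :: real assume y: "y \<noteq> x \<and> dist y x < d'"
    have ya: "a < y" "y < b" using y x by (auto simp: d'_def dist_real_def)
    show "dist ((integral {a..y} f - integral {a..x} f) / (y - x)) (f x) < \<epsilon>"
    proof (cases "x < y")
      case True
      have "integral {a..x} f + integral {x..y} f = integral {a..y} f"
        by (rule Henstock_Kurzweil_Integration.integral_combine) (use x ya True integrable_subinterval_real[OF f] in auto)
      then have eq: "integral {a..y} f - integral {a..x} f = integral {x..y} f" by simp
      have "\<bar>integral {x..y} f - f x * (y - x)\<bar> < e * (y - x)"
        by (rule dP) (use True y ya x in \<open>auto simp: d'_def dist_real_def\<close>)
      then have "\<bar>integral {x..y} f / (y - x) - f x\<bar> < e"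
        using True by (simp add: field_simps abs_divide del: divide_const_simps)
      then show ?thesis using eq n e_def by (simp add: dist_real_def)
    next
      case False
      then have yx: "y < x" using y by auto
      have "integral {a..y} f + integral {y..x} f = integral {a..x} f"
        by (rule Henstock_Kurzweil_Integration.integral_combine) (use x ya yx integrable_subinterval_real[OF f] in auto)
      then have eq: "integral {a..y} f - integral {a..x} f = - integral {y..x} f" by simp
      have "\<bar>integral {y..x} f - f x * (x - y)\<bar> < e * (x - y)"
        by (rule dP) (use yx y ya x in \<open>auto simp: d'_def dist_real_def\<close>)
      then have "\<bar>integral {y..x} f / (x - y) - f x\<bar> < e"
        using yx by (simp add: field_simps abs_divide del: divide_const_simps)
      moreover have "- integral {y..x} f / (y - x) = integral {y..x} f / (x - y)"
        using yx by (simp add: field_simps)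
      ultimately show ?thesis using eq n e_def by (simp add: dist_real_def)
    qed
  qed
qed

theorem lebesgue_differentiation:
  fixes f :: "real \<Rightarrow> real"
  assumes f: "f integrable_on {a..b}"
  obtains N where "negligible N"
    "\<And>x. x \<in> {a<..<b} - N \<Longrightarrow> ((\<lambda>t. integral {a..t} f) has_real_derivative f x) (at x)"
proof
  define N where "N = (\<Union>n. {x. badpt (1 / Suc n) f a b x})"
  show "negligible N" unfolding N_def
    by (rule negligible_Union_nat) (rule negligible_badpt[OF f], simp)
  fix x assume "x \<in> {a<..<b} - N"
  then show "((\<lambda>t. integral {a..t} f) has_real_derivative f x) (at x)"
    by (intro not_badpt_deriv[OF f]) (auto simp: N_def)
qed



section \<open>Iterated derivatives within a set\<close>

lemma vector_derivative_within_cong: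
  assumes "x \<in> S" "\<And>y. y \<in> S \<Longrightarrow> f y = g y"
  shows "vector_derivative f (at x within S) = vector_derivative g (at x within S)"
proof -
  have "(f has_vector_derivative D) (at x within S) \<longleftrightarrow> (g has_vector_derivative D) (at x within S)" for D
    using has_vector_derivative_transform_within[of f D x S 1 g]
      has_vector_derivative_transform_within[of g D x S 1 f] assms by auto
  then show ?thesis unfolding vector_derivative_def by simp
qed

lemma ider_cong:
  assumes "\<And>y. y \<in> S \<Longrightarrow> f y = g y"
  shows "x \<in> S \<Longrightarrow> ider n S f x = ider n S g x"
proof (induction n arbitrary: x)
  case 0 then show ?case using assms by simp
next
  case (Suc n)
  have "vector_derivative (ider n S f) (at x within S) = vector_derivative (ider n S g) (at x within S)"
    by (rule vector_derivative_within_cong) (use Suc in auto)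
  then show ?case by simp
qed

lemma ider_chain:
  fixes F :: "nat \<Rightarrow> real \<Rightarrow> real"
  assumes cd: "c < d"
    and F0: "\<And>x. x \<in> {c..d} \<Longrightarrow> F 0 x = f x"
    and FD: "\<And>n x. n < M \<Longrightarrow> x \<in> {c..d} \<Longrightarrow> (F n has_vector_derivative F (Suc n) x) (at x within {c..d})"
  shows "n \<le> M \<Longrightarrow> x \<in> {c..d} \<Longrightarrow> ider n {c..d} f x = F n x"
proof (induction n arbitrary: x)
  case 0 then show ?case using F0 by simp
next
  case (Suc n)
  have "(F n has_vector_derivative F (Suc n) x) (at x within {c..d})"
    using FD Suc by auto
  then have "(ider n {c..d} f has_vector_derivative F (Suc n) x) (at x within {c..d})"
    by (rule has_vector_derivative_transform_within[of _ _ _ _ 1]) (use Suc in auto)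
  then show ?case using vector_derivative_within_cbox[of c d x] cd Suc by simp
qed

lemma Ck_chain:
  fixes F :: "nat \<Rightarrow> real \<Rightarrow> real"
  assumes cd: "c < d"
    and F0: "\<And>x. x \<in> {c..d} \<Longrightarrow> F 0 x = f x"
    and FD: "\<And>n x. n < M \<Longrightarrow> x \<in> {c..d} \<Longrightarrow> (F n has_vector_derivative F (Suc n) x) (at x within {c..d})"
    and FC: "continuous_on {c..d} (F M)"
  shows "Ck_on M {c..d} f"
  unfolding Ck_on_def
proof (intro conjI allI impI ballI)
  fix n x assume n: "n < M" and x: "x \<in> {c..d}"
  have "(F n has_vector_derivative F (Suc n) x) (at x within {c..d})" using FD n x by auto
  then have "(ider n {c..d} f has_vector_derivative F (Suc n) x) (at x within {c..d})"
    by (rule has_vector_derivative_transform_within[of _ _ _ _ 1])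
       (use n x ider_chain[of c d F f M, OF cd F0 FD] in auto)
  then show "(ider n {c..d} f has_vector_derivative ider (Suc n) {c..d} f x) (at x within {c..d})"
    using ider_chain[of c d F f M "Suc n" x, OF cd F0 FD] n x by simp
next
  show "continuous_on {c..d} (ider M {c..d} f)"
    using FC by (rule continuous_on_eq) (use ider_chain[of c d F f M, OF cd F0 FD] in auto)
qed

lemma Ck_singleton: "Ck_on m {x} f"
  unfolding Ck_on_def
  by (auto simp: has_vector_derivative_def has_derivative_within_singleton_iff bounded_linear_mult_left)

lemma Ck_singleton': "c = d \<Longrightarrow> Ck_on m {c..d} f"
  using Ck_singleton by simp

lemma smooth_chain:
  fixes F :: "nat \<Rightarrow> real \<Rightarrow> real"
  assumes cd: "c < d"
    and F0: "\<And>x. x \<in> {c..d} \<Longrightarrow> F 0 x = f x"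
    and FD: "\<And>n x. x \<in> {c..d} \<Longrightarrow> (F n has_vector_derivative F (Suc n) x) (at x within {c..d})"
  shows "smooth_on {c..d} f"
  unfolding smooth_on_def
proof
  fix m
  show "Ck_on m {c..d} f"
  proof (rule Ck_chain[where F=F, OF cd F0])
    show "continuous_on {c..d} (F m)"
      unfolding continuous_on_eq_continuous_within
      using FD has_vector_derivative_continuous by blast
  qed (use FD in auto)
qed

lemma poly_vd: "((\<lambda>x. poly p x) has_vector_derivative poly (pderiv p) x) (at x within S)"
proof -
  have "(poly p has_real_derivative poly (pderiv p) x) (at x)" by (rule poly_DERIV)
  then have "(poly p has_vector_derivative poly (pderiv p) x) (at x)"
    by (simp add: has_real_derivative_iff_has_vector_derivative)
  then show ?thesis by (rule has_vector_derivative_at_within)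
qed

lemma ider_poly:
  assumes "c < d" "x \<in> {c..d}"
  shows "ider n {c..d} (poly p) x = poly ((pderiv ^^ n) p) x"
  using ider_chain[of c d "\<lambda>n. poly ((pderiv ^^ n) p)" "poly p" n n x] assms poly_vd by auto

lemma smooth_poly:
  assumes "c < d"
  shows "smooth_on {c..d} (poly p)"
  using smooth_chain[of c d "\<lambda>n. poly ((pderiv ^^ n) p)" "poly p"] assms poly_vd by auto

lemma pderiv_iter_zero: "degree (p::real poly) < n \<Longrightarrow> (pderiv ^^ n) p = 0"
proof (induction n arbitrary: p)
  case 0 then show ?case by simp
next
  case (Suc n)
  have "(pderiv ^^ n) (pderiv p) = 0"
  proof (cases "degree p = 0")
    case True then have "pderiv p = 0" using pderiv_eq_0_iff by blast
    have "(pderiv ^^ m) (0::real poly) = 0" for m by (induction m) auto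
    then show ?thesis using \<open>pderiv p = 0\<close> by simp
  next
    case False then have "degree (pderiv p) < n" using Suc by (simp add: degree_pderiv)
    then show ?thesis using Suc.IH by blast
  qed
  moreover have "(pderiv ^^ Suc n) p = (pderiv ^^ n) (pderiv p)"
    by (simp only: funpow_Suc_right o_apply)
  ultimately show ?case by simp
qed

section \<open>Truncated powers\<close>

definition tp :: "nat \<Rightarrow> real \<Rightarrow> real" where
  "tp r z = (if 0 < z then z ^ r / fact r else 0)"

lemma tp_nonpos[simp]: "z \<le> 0 \<Longrightarrow> tp r z = 0"
  by (simp add: tp_def)

lemma tp_pos: "0 \<le> z \<Longrightarrow> 0 < r \<Longrightarrow> tp r z = z ^ r / fact r"
  by (cases "z = 0") (auto simp: tp_def)

lemma tp_max: "0 < r \<Longrightarrow> tp r z = (max z 0) ^ r / fact r"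
  by (auto simp: tp_def max_def)

lemma tp_cont: "0 < r \<Longrightarrow> continuous_on S (tp r)"
proof -
  assume "0 < r"
  then have "tp r = (\<lambda>z. (max z 0) ^ r / fact r)" using tp_max by auto
  then show ?thesis by (auto intro!: continuous_intros)
qed

lemma tp_deriv_pos:
  assumes "0 < z" "0 < r"
  shows "(tp r has_real_derivative tp (r - 1) z) (at z)"
proof -
  have "((\<lambda>z. z ^ r / fact r) has_real_derivative (of_nat r * z ^ (r - 1)) / fact r) (at z)"
    by (auto intro!: derivative_eq_intros)
  moreover have "(of_nat r * z ^ (r - 1)) / fact r = tp (r - 1) z"
    using assms by (cases r) (auto simp: tp_def)
  ultimately have "((\<lambda>z. z ^ r / fact r) has_real_derivative tp (r - 1) z) (at z)" by simp
  then show ?thesis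
    by (rule has_field_derivative_transform_within_open[of _ _ _ "{0<..}"]) (use assms in \<open>auto simp: tp_def\<close>)
qed

lemma tp_deriv_neg:
  assumes "z < 0"
  shows "(tp r has_real_derivative tp (r - 1) z) (at z)"
proof -
  have "((\<lambda>z. 0) has_real_derivative tp (r - 1) z) (at z)" using assms by simp
  then show ?thesis
    by (rule has_field_derivative_transform_within_open[of _ _ _ "{..<0}"]) (use assms in \<open>auto simp: tp_def\<close>)
qed

lemma tp_deriv_zero:
  assumes "2 \<le> r"
  shows "(tp r has_real_derivative tp (r - 1) 0) (at 0)"
proof -
  have "((\<lambda>y. (tp r y - tp r 0) / (y - 0)) \<longlongrightarrow> 0) (at 0)"
  proof (rule tendsto_0_le[where K = 1])
    show "((\<lambda>y::real. y ^ (r - 1)) \<longlongrightarrow> 0) (at 0)"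
    proof -
      have c: "((\<lambda>y::real. y ^ (r - 1)) \<longlongrightarrow> 0 ^ (r - 1)) (at 0)" by (intro tendsto_intros)
      have z: "(0::real) ^ (r - 1) = 0" using assms by (simp add: power_0_left)
      show ?thesis using c unfolding z .
    qed
    show "\<forall>\<^sub>F x in at 0. norm ((tp r x - tp r 0) / (x - 0)) \<le> norm (x ^ (r - 1)) * 1"
    proof (rule always_eventually, rule allI)
      fix x :: real
      show "norm ((tp r x - tp r 0) / (x - 0)) \<le> norm (x ^ (r - 1)) * 1"
      proof (cases "0 < x")
        case True
        have "x ^ r = x * x ^ (r - 1)" using assms by (cases r) auto
        moreover have "fact r \<ge> (1::real)" by simp
        moreover have "x ^ (r - 1) \<ge> 0" using True by simp
        ultimately have "x ^ r / fact r / x \<le> x ^ (r - 1)" using True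
          by (simp add: divide_le_eq mult_le_cancel_left1 le_divide_eq mult.commute)
        then show ?thesis using True by (simp add: tp_def abs_of_nonneg)
      qed (simp add: tp_def)
    qed
  qed
  then show ?thesis using assms by (simp add: has_field_derivative_iff tp_def)
qed

lemma tp_deriv:
  assumes "0 < r" "z \<noteq> 0 \<or> 2 \<le> r"
  shows "(tp r has_real_derivative tp (r - 1) z) (at z)"
proof (cases "z = 0")
  case True then show ?thesis using assms tp_deriv_zero by auto
next
  case False
  then consider "z < 0" | "0 < z" by linarith
  then show ?thesis using assms tp_deriv_pos tp_deriv_neg by cases auto
qed

lemma tp_comp_deriv:
  assumes "0 < r" "\<sigma> * (t - x) \<noteq> 0 \<or> 2 \<le> r"
  shows "((\<lambda>t. tp r (\<sigma> * (t - x))) has_vector_derivative \<sigma> * tp (r - 1) (\<sigma> * (t - x))) (at t within S)"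
proof -
  have "((\<lambda>t. tp r (\<sigma> * (t - x))) has_real_derivative tp (r - 1) (\<sigma> * (t - x)) * (\<sigma> * 1)) (at t)"
    by (rule DERIV_chain2[where g="\<lambda>t. \<sigma> * (t - x)", OF tp_deriv[OF assms]]) (auto intro!: derivative_eq_intros)
  then show ?thesis
    by (simp add: has_real_derivative_iff_has_vector_derivative has_vector_derivative_at_within mult.commute)
qed



definition schain :: "nat \<Rightarrow> (nat \<Rightarrow> real \<Rightarrow> real) \<Rightarrow> bool" where
  "schain k g \<longleftrightarrow> (\<forall>l<k. \<forall>t\<in>{0..1}. (g (Suc l) has_integral (g l t - g l 0)) {0..t})"

lemma sobolev_HE:
  assumes "f \<in> sobolev_H k"
  obtains g where "\<And>t. t \<in> {0..1} \<Longrightarrow> g 0 t = f t" "schain k g"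
    "g k absolutely_integrable_on {0..1}" "(\<lambda>t. (g k t)\<^sup>2) integrable_on {0..1}"
  using assms unfolding sobolev_H_def schain_def by blast

lemma schain_eq:
  assumes "schain k g" "l < k" "t \<in> {0..1}"
  shows "g l t = g l 0 + integral {0..t} (g (Suc l))"
proof -
  have "(g (Suc l) has_integral (g l t - g l 0)) {0..t}" using assms(1) assms(2,3) unfolding schain_def by simp
  then have "integral {0..t} (g (Suc l)) = g l t - g l 0" by (rule integral_unique)
  then show ?thesis by simp
qed

lemma schain_int:
  assumes "schain k g" "l < k"
  shows "g (Suc l) integrable_on {0..1}"
proof -
  have "(g (Suc l) has_integral (g l 1 - g l 0)) {0..1}" using assms(1) assms(2) unfolding schain_def by simp
  then show ?thesis by (rule has_integral_integrable)
qed

lemma schain_cont: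
  assumes "schain k g" "l < k"
  shows "continuous_on {0..1} (g l)"
proof -
  have c1: "continuous_on {0..1} (\<lambda>t. integral {0..t} (g (Suc l)))"
    by (rule indefinite_integral_continuous_1) (rule schain_int[OF assms])
  have "continuous_on {0..1} (\<lambda>t. g l 0 + integral {0..t} (g (Suc l)))"
    by (rule continuous_on_add[OF continuous_on_const c1])
  moreover have "\<And>t. t \<in> {0..1} \<Longrightarrow> g l 0 + integral {0..t} (g (Suc l)) = g l t"
    using schain_eq[OF assms] by (rule sym)
  ultimately show ?thesis by (rule continuous_on_eq)
qed

lemma schain_deriv:
  assumes "schain k g" "Suc l < k" "t \<in> {0..1}"
  shows "(g l has_vector_derivative g (Suc l) t) (at t within {0..1})"
proof -
  have c: "continuous_on {0..1} (g (Suc l))" using schain_cont[OF assms(1,2)] .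
  have d1: "((\<lambda>u. integral {0..u} (g (Suc l))) has_vector_derivative g (Suc l) t) (at t within {0..1})"
    by (rule integral_has_vector_derivative[OF c assms(3)])
  have "((\<lambda>u. g l 0 + integral {0..u} (g (Suc l))) has_vector_derivative 0 + g (Suc l) t) (at t within {0..1})"
    by (rule has_vector_derivative_add[OF has_vector_derivative_const d1])
  then have "((\<lambda>u. g l 0 + integral {0..u} (g (Suc l))) has_vector_derivative g (Suc l) t) (at t within {0..1})"
    by simp
  then show ?thesis
  proof (rule has_vector_derivative_transform_within[of _ _ _ _ 1])
    fix x :: real assume "x \<in> {0..1}"
    then show "g l 0 + integral {0..x} (g (Suc l)) = g l x"
      using schain_eq[OF assms(1), of l x] assms(2) by simp
  qed (use assms in auto)
qed

lemma schain_ider: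
  assumes "schain k g" "\<And>t. t \<in> {0..1} \<Longrightarrow> g 0 t = f t" "l < k" "t \<in> {0..1}"
  shows "D01 l f t = g l t"
proof (rule ider_chain[of 0 1 g f "k - 1" l t])
  show "\<And>n x. n < k - 1 \<Longrightarrow> x \<in> {0..1} \<Longrightarrow> (g n has_vector_derivative g (Suc n) x) (at x within {0..1})"
    using schain_deriv[OF assms(1)] by auto
qed (use assms in auto)

lemma schain_ider_top:
  assumes "schain k g" "\<And>t. t \<in> {0..1} \<Longrightarrow> g 0 t = f t" "1 \<le> k"
  obtains N where "negligible N" "\<And>t. t \<in> {0<..<1} - N \<Longrightarrow> D01 k f t = g k t"
proof -
  have int: "g k integrable_on {0..1}" using schain_int[OF assms(1), of "k - 1"] assms(3) by simp
  obtain N where N: "negligible N"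
    "\<And>x. x \<in> {0<..<1} - N \<Longrightarrow> ((\<lambda>t. integral {0..t} (g k)) has_real_derivative g k x) (at x)"
    using lebesgue_differentiation[OF int] by blast
  show thesis
  proof (rule that[OF N(1)])
    fix t assume t: "t \<in> {0<..<1} - N"
    have "((\<lambda>u. g (k - 1) 0 + integral {0..u} (g k)) has_vector_derivative g k t) (at t)"
    proof -
      have d1: "((\<lambda>u. integral {0..u} (g k)) has_vector_derivative g k t) (at t)"
        using N(2)[OF t] by (simp add: has_real_derivative_iff_has_vector_derivative)
      have "((\<lambda>u. g (k - 1) 0 + integral {0..u} (g k)) has_vector_derivative 0 + g k t) (at t)"
        by (rule has_vector_derivative_add[OF has_vector_derivative_const d1])
      then show ?thesis by simp
    qed
    then have "((\<lambda>u. g (k - 1) 0 + integral {0..u} (g k)) has_vector_derivative g k t) (at t within {0..1})"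
      by (rule has_vector_derivative_at_within)
    then have "(D01 (k - 1) f has_vector_derivative g k t) (at t within {0..1})"
    proof (rule has_vector_derivative_transform_within[of _ _ _ _ 1])
      fix x :: real assume "x \<in> {0..1}"
      then show "g (k - 1) 0 + integral {0..x} (g k) = D01 (k - 1) f x"
      proof -
        have "g (k - 1) x = g (k - 1) 0 + integral {0..x} (g k)"
          using schain_eq[OF assms(1), of "k - 1" x] assms(3) \<open>x \<in> {0..1}\<close> by simp
        moreover have "D01 (k - 1) f x = g (k - 1) x"
          using schain_ider[OF assms(1,2), of "k - 1" x] assms(3) \<open>x \<in> {0..1}\<close> by simp
        ultimately show ?thesis by simp
      qed
    qed (use t in auto)
    then have "vector_derivative (D01 (k - 1) f) (at t within {0..1}) = g k t"
      using vector_derivative_within_cbox[of 0 1 t] t by auto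
    moreover have "D01 k f t = vector_derivative (D01 (k - 1) f) (at t within {0..1})"
    proof -
      have "k = Suc (k - 1)" using assms(3) by simp
      then have "D01 k f t = D01 (Suc (k - 1)) f t" by simp
      then show ?thesis by simp
    qed
    ultimately show "D01 k f t = g k t" by simp
  qed
qed



lemma tp_comp_rderiv:
  assumes "0 < r" "\<sigma> * (t - x) \<noteq> 0 \<or> 2 \<le> r"
  shows "((\<lambda>t. tp r (\<sigma> * (t - x))) has_real_derivative \<sigma> * tp (r - 1) (\<sigma> * (t - x))) (at t)"
proof -
  have "((\<lambda>t. tp r (\<sigma> * (t - x))) has_real_derivative tp (r - 1) (\<sigma> * (t - x)) * (\<sigma> * 1)) (at t)"
    by (rule DERIV_chain2[where g="\<lambda>t. \<sigma> * (t - x)", OF tp_deriv[OF assms]]) (auto intro!: derivative_eq_intros)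
  then show ?thesis by (simp add: mult.commute)
qed

definition Xf :: "nat \<Rightarrow> real \<Rightarrow> real \<Rightarrow> real \<Rightarrow> nat \<Rightarrow> real \<Rightarrow> real" where
  "Xf k \<sigma> x y l s = \<sigma> ^ l * (tp (k - l) (\<sigma> * (s - x)) - tp (k - l) (\<sigma> * (s - y)))"

lemma Xf_deriv:
  assumes s: "\<sigma> * \<sigma> = 1" and l: "l < k" and c: "(s \<noteq> x \<and> s \<noteq> y) \<or> Suc l < k"
  shows "(Xf k \<sigma> x y l has_real_derivative Xf k \<sigma> x y (Suc l) s) (at s)"
proof -
  have s0: "\<sigma> \<noteq> 0" using s by auto
  have r: "0 < k - l" using l by simp
  have c1: "\<sigma> * (s - x) \<noteq> 0 \<or> 2 \<le> k - l" using c s0 by auto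
  have c2: "\<sigma> * (s - y) \<noteq> 0 \<or> 2 \<le> k - l" using c s0 by auto
  have "((\<lambda>s. \<sigma> ^ l * (tp (k - l) (\<sigma> * (s - x)) - tp (k - l) (\<sigma> * (s - y)))) has_real_derivative
      \<sigma> ^ l * (\<sigma> * tp (k - l - 1) (\<sigma> * (s - x)) - \<sigma> * tp (k - l - 1) (\<sigma> * (s - y)))) (at s)"
    by (intro DERIV_cmult DERIV_diff tp_comp_rderiv r c1 c2)
  moreover have "k - l - 1 = k - Suc l" by simp
  ultimately show ?thesis unfolding Xf_def by (simp add: algebra_simps)
qed

lemma Xf_cont:
  assumes "l < k"
  shows "continuous_on S (Xf k \<sigma> x y l)"
proof -
  have "continuous_on S (\<lambda>s. \<sigma> ^ l * (tp (k - l) (\<sigma> * (s - x)) - tp (k - l) (\<sigma> * (s - y))))"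
    using assms by (intro continuous_intros continuous_on_compose2[OF tp_cont[of "k - l" UNIV]]) auto
  then show ?thesis unfolding Xf_def by simp
qed

lemma sigma_cases: "\<sigma> * \<sigma> = (1::real) \<Longrightarrow> \<sigma> = 1 \<or> \<sigma> = -1"
  by (metis square_eq_1_iff)

lemma Xf_top_bound:
  assumes "\<sigma> * \<sigma> = 1"
  shows "\<bar>Xf k \<sigma> x y k s\<bar> \<le> 2"
proof -
  have a: "\<bar>\<sigma> ^ k\<bar> = 1" using sigma_cases[OF assms] by (auto simp: power_abs)
  have "\<bar>tp 0 (\<sigma> * (s - x)) - tp 0 (\<sigma> * (s - y))\<bar> \<le> 2"
    by (auto simp: tp_def)
  then show ?thesis unfolding Xf_def by (simp add: abs_mult a)
qed

definition Gf :: "nat \<Rightarrow> real \<Rightarrow> real \<Rightarrow> real \<Rightarrow> real poly \<Rightarrow> nat \<Rightarrow> real \<Rightarrow> real" where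
  "Gf k \<sigma> x y q l s = Xf k \<sigma> x y l s - poly ((pderiv ^^ l) q) s"

lemma Gf_deriv:
  assumes s: "\<sigma> * \<sigma> = 1" and l: "l < k" and c: "(s \<noteq> x \<and> s \<noteq> y) \<or> Suc l < k"
  shows "(Gf k \<sigma> x y q l has_real_derivative Gf k \<sigma> x y q (Suc l) s) (at s)"
proof -
  have "((\<lambda>s. Xf k \<sigma> x y l s - poly ((pderiv ^^ l) q) s) has_real_derivative
     Xf k \<sigma> x y (Suc l) s - poly (pderiv ((pderiv ^^ l) q)) s) (at s)"
    by (intro DERIV_diff Xf_deriv[OF assms] poly_DERIV)
  then show ?thesis by (simp add: Gf_def[abs_def])
qed

lemma Gf_cont:
  assumes "l < k"
  shows "continuous_on S (Gf k \<sigma> x y q l)"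
proof -
  have "continuous_on S (\<lambda>s. Xf k \<sigma> x y l s - poly ((pderiv ^^ l) q) s)"
    by (intro continuous_intros Xf_cont[OF assms, unfolded continuous_on_eq_continuous_within])
       (use Xf_cont[OF assms] in \<open>auto simp: continuous_on_eq_continuous_within\<close>)
  then show ?thesis by (simp add: Gf_def[abs_def])
qed

lemma Gf_integral:
  assumes s: "\<sigma> * \<sigma> = 1" and l: "l < k" and ab: "a \<le> b"
  shows "(Gf k \<sigma> x y q (Suc l) has_integral (Gf k \<sigma> x y q l b - Gf k \<sigma> x y q l a)) {a..b}"
proof (rule fundamental_theorem_of_calculus_interior_strong[of "{x, y}"])
  show "continuous_on {a..b} (Gf k \<sigma> x y q l)" by (rule Gf_cont[OF l])
  fix u assume "u \<in> {a<..<b} - {x, y}"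
  then have "(Gf k \<sigma> x y q l has_real_derivative Gf k \<sigma> x y q (Suc l) u) (at u)"
    by (intro Gf_deriv[OF s l]) auto
  then show "(Gf k \<sigma> x y q l has_vector_derivative Gf k \<sigma> x y q (Suc l) u) (at u)"
    by (simp add: has_real_derivative_iff_has_vector_derivative)
qed (use ab in auto)

lemma Gf_schain:
  assumes s: "\<sigma> * \<sigma> = 1"
  shows "schain k (Gf k \<sigma> x y q)"
  unfolding schain_def using Gf_integral[OF s] by auto

lemma Xf_top_int:
  assumes s: "\<sigma> * \<sigma> = 1" and k: "0 < k"
  shows "Xf k \<sigma> x y k absolutely_integrable_on {0..1}"
proof (rule absolutely_integrable_integrable_bound[where g="\<lambda>_. 2"])
  show "\<And>s. s \<in> {0..1} \<Longrightarrow> norm (Xf k \<sigma> x y k s) \<le> 2" using Xf_top_bound[OF s] by simp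
  have "(Gf k \<sigma> x y 0 (Suc (k - 1)) has_integral (Gf k \<sigma> x y 0 (k - 1) 1 - Gf k \<sigma> x y 0 (k - 1) 0)) {0..1}"
    using Gf_integral[OF s, of "k - 1" k 0 1 x y 0] k by simp
  moreover have "Gf k \<sigma> x y 0 (Suc (k - 1)) = Xf k \<sigma> x y k"
    using k by (simp add: Gf_def[abs_def])
  ultimately show "Xf k \<sigma> x y k integrable_on {0..1}" by (metis has_integral_integrable)
qed auto

lemma poly_bounded01: "\<exists>B. \<forall>s\<in>{0..1::real}. \<bar>poly p s\<bar> \<le> B"
proof -
  have "compact (poly p ` {0..1::real})"
    by (rule compact_continuous_image) (auto intro: continuous_intros)
  then have "bounded (poly p ` {0..1::real})" by (rule compact_imp_bounded)
  then show ?thesis unfolding bounded_iff by auto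
qed

lemma Gf_top_int:
  assumes s: "\<sigma> * \<sigma> = 1" and k: "0 < k"
  shows "Gf k \<sigma> x y q k absolutely_integrable_on {0..1}"
proof -
  have p: "(\<lambda>s. poly ((pderiv ^^ k) q) s) absolutely_integrable_on {0..1}"
    by (rule absolutely_integrable_continuous_real) (auto intro: continuous_intros)
  have "(\<lambda>s. Xf k \<sigma> x y k s - poly ((pderiv ^^ k) q) s) absolutely_integrable_on {0..1}"
    by (rule set_integral_diff(1)[OF Xf_top_int[OF s k] p])
  then show ?thesis by (simp add: Gf_def[abs_def])
qed

lemma Gf_top_sq:
  assumes s: "\<sigma> * \<sigma> = 1" and k: "0 < k"
  shows "(\<lambda>s. (Gf k \<sigma> x y q k s)\<^sup>2) integrable_on {0..1}"
proof -
  have ai: "Gf k \<sigma> x y q k absolutely_integrable_on {0..1}" by (rule Gf_top_int[OF s k])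
  obtain B where B: "\<forall>s\<in>{0..1::real}. \<bar>poly ((pderiv ^^ k) q) s\<bar> \<le> B" using poly_bounded01 by blast
  have "bounded (Gf k \<sigma> x y q k ` {0..1})"
    unfolding bounded_iff
  proof (intro exI ballI)
    fix z assume "z \<in> Gf k \<sigma> x y q k ` {0..1}"
    then obtain s where s01: "s \<in> {0..1}" "z = Gf k \<sigma> x y q k s" by auto
    have "\<bar>Xf k \<sigma> x y k s\<bar> \<le> 2" by (rule Xf_top_bound[OF s])
    moreover have "\<bar>poly ((pderiv ^^ k) q) s\<bar> \<le> B" using B s01 by auto
    moreover have "\<bar>Xf k \<sigma> x y k s - poly ((pderiv ^^ k) q) s\<bar> \<le> \<bar>Xf k \<sigma> x y k s\<bar> + \<bar>poly ((pderiv ^^ k) q) s\<bar>"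
      by (rule abs_triangle_ineq4)
    ultimately show "norm z \<le> 2 + B" using s01 by (simp add: Gf_def)
  qed
  moreover have "Gf k \<sigma> x y q k \<in> borel_measurable (lebesgue_on {0..1})"
    by (rule absolutely_integrable_imp_borel_measurable[OF ai]) auto
  ultimately have "(\<lambda>s. Gf k \<sigma> x y q k s * Gf k \<sigma> x y q k s) absolutely_integrable_on {0..1}"
    using absolutely_integrable_bounded_measurable_product_real[OF _ _ _ ai] by auto
  then show ?thesis by (simp add: power2_eq_square absolutely_integrable_on_def)
qed



lemma pderiv_sum': "pderiv (sum f M) = (\<Sum>m\<in>M. pderiv (f m))"
  by (induction M rule: infinite_finite_induct) (auto simp: pderiv_add)

lemma pderiv_iter_sum: "(pderiv ^^ l) (sum f M) = (\<Sum>m\<in>M. (pderiv ^^ l) (f m))"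
  by (induction l) (auto simp: pderiv_sum')

lemma pderiv_iter_smult: "(pderiv ^^ l) (smult c p) = smult c ((pderiv ^^ l) p)"
  by (induction l) (auto simp: pderiv_smult)

lemma dvd_pderiv_power:
  fixes p :: "real poly"
  assumes "r ^ Suc n dvd p"
  shows "r ^ n dvd pderiv p"
proof -
  obtain u where u: "p = r ^ Suc n * u" using assms by (elim dvdE)
  have "pderiv p = r ^ Suc n * pderiv u + u * (smult (of_nat (Suc n)) (r ^ n) * pderiv r)"
    unfolding u pderiv_mult pderiv_power_Suc by simp
  also have "\<dots> = r ^ n * (r * pderiv u + u * smult (of_nat (Suc n)) (pderiv r))"
    by (simp add: algebra_simps)
  finally show ?thesis by simp
qed

lemma dvd_pderiv_iter:
  fixes p :: "real poly"
  shows "r ^ (l + m) dvd p \<Longrightarrow> r ^ m dvd (pderiv ^^ l) p"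
proof (induction l arbitrary: m)
  case 0 then show ?case by simp
next
  case (Suc l)
  have "r ^ (l + Suc m) dvd p" using Suc.prems by simp
  then have "r ^ Suc m dvd (pderiv ^^ l) p" by (rule Suc.IH)
  then show ?case by (simp add: dvd_pderiv_power)
qed

lemma root_pderiv_iter:
  fixes p :: "real poly"
  assumes "[:-a, 1:] ^ n dvd p" "l < n"
  shows "poly ((pderiv ^^ l) p) a = 0"
proof -
  have "[:-a, 1:] ^ (l + (n - l)) dvd p" using assms by simp
  then have "[:-a, 1:] ^ (n - l) dvd (pderiv ^^ l) p" by (rule dvd_pderiv_iter)
  moreover have "[:-a, 1:] dvd [:-a, 1:] ^ (n - l)" using assms(2)
    by (metis dvd_power gr0I zero_less_diff)
  ultimately have "[:-a, 1:] dvd (pderiv ^^ l) p" using dvd_trans by blast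
  then show ?thesis by (simp add: poly_eq_0_iff_dvd)
qed

locale crit_setup =
  fixes k N j :: nat and t :: "nat \<Rightarrow> real" and \<gamma> :: "real \<Rightarrow> real" and g :: "nat \<Rightarrow> real \<Rightarrow> real"
  assumes k1: "1 \<le> k" and N1: "1 \<le> N" and t0: "t 0 = 0" and tN: "t N = 1"
    and tinc: "\<And>i. i < N \<Longrightarrow> t i < t (Suc i)" and jN: "j \<le> N"
    and g0: "\<And>s. s \<in> {0..1} \<Longrightarrow> g 0 s = \<gamma> s" and sch: "schain k g"
    and gk: "g k absolutely_integrable_on {0..1}"
    and crit: "\<forall>\<xi>\<in>V_k k N t j. integral {0..1} (\<lambda>s. D01 k \<gamma> s * D01 k \<xi> s) = 0"
begin

definition Ms :: "nat set" where "Ms = {m. m \<le> N \<and> m \<noteq> j}"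

lemma Ms_finite: "finite Ms" unfolding Ms_def by auto

lemma t_mono: "i < i' \<Longrightarrow> i' \<le> N \<Longrightarrow> t i < t i'"
proof (induction i')
  case 0 then show ?case by simp
next
  case (Suc i')
  then have "t i' < t (Suc i')" using tinc by simp
  then show ?case using Suc by (cases "i = i'") auto
qed

lemma t_mono_le: "i \<le> i' \<Longrightarrow> i' \<le> N \<Longrightarrow> t i \<le> t i'"
  using t_mono by (cases "i = i'") (auto simp: less_imp_le)

lemma t_inj: "i \<le> N \<Longrightarrow> i' \<le> N \<Longrightarrow> t i = t i' \<Longrightarrow> i = i'"
  using t_mono by (metis less_irrefl linorder_neqE_nat)

lemma t_range: "i \<le> N \<Longrightarrow> t i \<in> {0..1}"
  using t_mono_le[of 0 i] t_mono_le[of i N] t0 tN by auto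

definition qm :: "nat \<Rightarrow> real poly" where
  "qm m = [:- t j, 1:] ^ k * (\<Prod>i\<in>Ms - {m}. [:- t i, 1:])"

definition pb :: "nat \<Rightarrow> real poly" where
  "pb m = smult (1 / poly (qm m) (t m)) (qm m)"

lemma qm_nz: "m \<in> Ms \<Longrightarrow> poly (qm m) (t m) \<noteq> 0"
proof -
  assume m: "m \<in> Ms"
  have "t m \<noteq> t j" using m t_inj jN by (auto simp: Ms_def)
  moreover have "\<forall>i\<in>Ms - {m}. t m - t i \<noteq> 0" using m t_inj by (auto simp: Ms_def)
  ultimately show ?thesis unfolding qm_def using Ms_finite by (auto simp: poly_prod)
qed

lemma pb_node: "m \<in> Ms \<Longrightarrow> i \<in> Ms \<Longrightarrow> poly (pb m) (t i) = (if i = m then 1 else 0)"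
proof -
  assume m: "m \<in> Ms" and i: "i \<in> Ms"
  show ?thesis
  proof (cases "i = m")
    case True then show ?thesis using qm_nz[OF m] by (simp add: pb_def)
  next
    case False
    then have "poly (\<Prod>i\<in>Ms - {m}. [:- t i, 1:]) (t i) = 0"
      using i Ms_finite by (auto simp: poly_prod)
    then show ?thesis using False by (simp add: pb_def qm_def)
  qed
qed

lemma pb_a: "l < k \<Longrightarrow> poly ((pderiv ^^ l) (pb m)) (t j) = 0"
proof -
  assume l: "l < k"
  have "[:- t j, 1:] ^ k dvd pb m" unfolding pb_def qm_def
    by (simp add: dvd_smult)
  then show ?thesis by (rule root_pderiv_iter[OF _ l])
qed

end



lemma Xf_top_val:
  assumes s: "\<sigma> * \<sigma> = 1" and xy: "x < y" and sx: "s \<noteq> x" "s \<noteq> y"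
  shows "Xf k \<sigma> x y k s = (if s \<in> {x..y} then \<sigma> ^ (k + 1) else 0)"
  using sigma_cases[OF s]
proof
  assume "\<sigma> = 1" then show ?thesis using xy sx by (auto simp: Xf_def tp_def)
next
  assume m: "\<sigma> = -1"
  show ?thesis
  proof (cases "s < x")
    case True then show ?thesis using xy m by (auto simp: Xf_def tp_def)
  next
    case False
    then show ?thesis using xy m sx by (auto simp: Xf_def tp_def)
  qed
qed

lemma Xf_low_zero:
  assumes s: "\<sigma> * \<sigma> = 1" and l: "l < k" and "0 \<le> \<sigma> * (x - a)" "0 \<le> \<sigma> * (y - a)"
  shows "Xf k \<sigma> x y l a = 0"
proof -
  have "\<sigma> * (a - x) \<le> 0" "\<sigma> * (a - y) \<le> 0" using assms by (auto simp: algebra_simps)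
  then show ?thesis by (simp add: Xf_def)
qed

context crit_setup
begin

abbreviation h where "h \<equiv> g k"

definition cc :: "nat \<Rightarrow> real" where
  "cc m = integral {0..1} (\<lambda>s. h s * poly ((pderiv ^^ k) (pb m)) s)"

lemma h_int: "h integrable_on {0..1}"
  using gk by (simp add: absolutely_integrable_on_def)

lemma h_poly_int: "(\<lambda>s. h s * poly p s) integrable_on {0..1}"
proof -
  have b: "bounded (poly p ` {0..1::real})"
    by (rule compact_imp_bounded, rule compact_continuous_image) (auto intro: continuous_intros)
  have m: "poly p \<in> borel_measurable (lebesgue_on {0..1::real})"
    by (rule continuous_imp_measurable_on_sets_lebesgue) (auto intro: continuous_intros)
  have "(\<lambda>s. poly p s * h s) absolutely_integrable_on {0..1}"
    by (rule absolutely_integrable_bounded_measurable_product_real[OF m _ b gk]) auto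
  then show ?thesis by (simp add: absolutely_integrable_on_def mult.commute)
qed

lemma g_top_diff:
  assumes "0 \<le> x" "x \<le> y" "y \<le> 1"
  shows "integral {x..y} h = g (k - 1) y - g (k - 1) x"
proof -
  have ky: "g (k - 1) y = g (k - 1) 0 + integral {0..y} h"
    using schain_eq[OF sch, of "k - 1" y] k1 assms by simp
  have kx: "g (k - 1) x = g (k - 1) 0 + integral {0..x} h"
    using schain_eq[OF sch, of "k - 1" x] k1 assms by simp
  have "integral {0..x} h + integral {x..y} h = integral {0..y} h"
    by (rule Henstock_Kurzweil_Integration.integral_combine)
       (use assms integrable_on_subinterval[OF h_int, of 0 y] in auto)
  then show ?thesis using kx ky by simp
qed

lemma key_identity:
  assumes s: "\<sigma> * \<sigma> = 1" and xy: "x < y" "0 \<le> x" "y \<le> 1"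
    and side: "0 \<le> \<sigma> * (x - t j)" "0 \<le> \<sigma> * (y - t j)"
  shows "\<sigma> ^ (k + 1) * (g (k - 1) y - g (k - 1) x) =
     (\<Sum>m\<in>Ms. (tp k (\<sigma> * (t m - x)) - tp k (\<sigma> * (t m - y))) * cc m)"
proof -
  define \<beta> where "\<beta> m = Xf k \<sigma> x y 0 (t m)" for m
  have \<beta>: "\<beta> m = tp k (\<sigma> * (t m - x)) - tp k (\<sigma> * (t m - y))" for m
    by (simp add: \<beta>_def Xf_def)
  define q where "q = (\<Sum>m\<in>Ms. smult (\<beta> m) (pb m))"
  define G where "G = Gf k \<sigma> x y q"
  have k0: "0 < k" using k1 by simp
  have polyq: "poly ((pderiv ^^ l) q) s = (\<Sum>m\<in>Ms. \<beta> m * poly ((pderiv ^^ l) (pb m)) s)" for l s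
    by (simp add: q_def pderiv_iter_sum pderiv_iter_smult poly_sum)
  have schG: "schain k G" unfolding G_def by (rule Gf_schain[OF s])
  have Ga: "G l (t j) = 0" if "l < k" for l
  proof -
    have "Xf k \<sigma> x y l (t j) = 0" by (rule Xf_low_zero[OF s that side])
    moreover have "poly ((pderiv ^^ l) q) (t j) = 0" using pb_a[OF that] by (simp add: polyq)
    ultimately show ?thesis by (simp add: G_def Gf_def)
  qed
  have tj01: "t j \<in> {0..1}" using t_range jN by simp
  have xiV: "G 0 \<in> V_k k N t j"
    unfolding V_k_def
  proof (intro CollectI conjI allI impI ballI)
    show "G 0 \<in> sobolev_H k"
      unfolding sobolev_H_def
      by (rule CollectI, rule exI[of _ G])
         (use schG Gf_top_int[OF s k0] Gf_top_sq[OF s k0] in \<open>auto simp: G_def schain_def\<close>)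
  next
    fix i assume i: "i \<le> N"
    show "G 0 (t i) = 0"
    proof (cases "i = j")
      case True then show ?thesis using Ga k0 by simp
    next
      case False
      then have iM: "i \<in> Ms" using i by (simp add: Ms_def)
      have "poly q (t i) = (\<Sum>m\<in>Ms. \<beta> m * (if i = m then 1 else 0))"
        using polyq[of 0 "t i"] pb_node[OF _ iM] by simp
      also have "\<dots> = \<beta> i" using iM Ms_finite by (simp add: if_distrib cong: if_cong)
      finally show ?thesis by (simp add: G_def Gf_def \<beta>_def)
    qed
  next
    fix l assume l: "l \<in> {1..k - 1}"
    then have lk: "l < k" using k1 by auto
    have "D01 l (G 0) (t j) = G l (t j)"
      by (rule schain_ider[OF schG _ lk tj01]) simp
    then show "D01 l (G 0) (t j) = 0" using Ga[OF lk] by simp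
  qed
  have crit0: "integral {0..1} (\<lambda>s. D01 k \<gamma> s * D01 k (G 0) s) = 0"
    using crit xiV by blast
  obtain N1 where N1: "negligible N1" "\<And>s. s \<in> {0<..<1} - N1 \<Longrightarrow> D01 k \<gamma> s = h s"
    using schain_ider_top[OF sch g0 k1] by blast
  obtain N2 where N2: "negligible N2" "\<And>s. s \<in> {0<..<1} - N2 \<Longrightarrow> D01 k (G 0) s = G k s"
    using schain_ider_top[OF schG _ k1, of "G 0"] by blast
  define P where "P m s = poly ((pderiv ^^ k) (pb m)) s" for m s
  define R where "R s = \<sigma> ^ (k + 1) * (if s \<in> {x..y} then h s else 0) - (\<Sum>m\<in>Ms. \<beta> m * (h s * P m s))" for s
  have negl: "negligible (N1 \<union> N2 \<union> {0, 1, x, y})"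
    using N1(1) N2(1) by (auto intro: negligible_Un negligible_finite)
  have "integral {0..1} (\<lambda>s. D01 k \<gamma> s * D01 k (G 0) s) = integral {0..1} R"
  proof (rule integral_spike[OF negl])
    fix s assume "s \<in> {0..1} - (N1 \<union> N2 \<union> {0, 1, x, y})"
    then have s1: "s \<in> {0<..<1} - N1" "s \<in> {0<..<1} - N2" "s \<noteq> x" "s \<noteq> y" by auto
    have "G k s = Xf k \<sigma> x y k s - (\<Sum>m\<in>Ms. \<beta> m * P m s)"
      by (simp add: G_def Gf_def polyq P_def)
    also have "Xf k \<sigma> x y k s = (if s \<in> {x..y} then \<sigma> ^ (k + 1) else 0)"
      by (rule Xf_top_val[OF s xy(1) s1(3,4)])
    finally have Gk: "G k s = (if s \<in> {x..y} then \<sigma> ^ (k + 1) else 0) - (\<Sum>m\<in>Ms. \<beta> m * P m s)" .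
    have e1: "h s * (\<Sum>m\<in>Ms. \<beta> m * P m s) = (\<Sum>m\<in>Ms. \<beta> m * (h s * P m s))"
      by (simp add: sum_distrib_left mult.left_commute)
    have "h s * G k s = R s"
    proof (cases "s \<in> {x..y}")
      case True then show ?thesis unfolding Gk R_def using e1 by (simp add: right_diff_distrib mult.commute)
    next
      case False
      then have "(if s \<in> {x..y} then \<sigma> ^ (k + 1) else 0) = 0" "(if s \<in> {x..y} then h s else 0) = 0" by auto
      then show ?thesis unfolding Gk R_def using e1 by (simp only:) (simp add: right_diff_distrib)
    qed
    then show "R s = D01 k \<gamma> s * D01 k (G 0) s" using N1(2)[OF s1(1)] N2(2)[OF s1(2)] by simp
  qed
  also have "integral {0..1} R = \<sigma> ^ (k + 1) * integral {0..1} (\<lambda>s. if s \<in> {x..y} then h s else 0)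
      - (\<Sum>m\<in>Ms. \<beta> m * integral {0..1} (\<lambda>s. h s * P m s))"
  proof -
    have i1: "(\<lambda>s. if s \<in> {x..y} then h s else 0) integrable_on {0..1}"
      unfolding integrable_restrict_Int
      using integrable_on_subinterval[OF h_int, of x y] xy by (simp add: Int_absorb2)
    have i2: "(\<lambda>s. h s * P m s) integrable_on {0..1}" for m
      unfolding P_def by (rule h_poly_int)
    have "integral {0..1} R = integral {0..1} (\<lambda>s. \<sigma> ^ (k + 1) * (if s \<in> {x..y} then h s else 0))
       - integral {0..1} (\<lambda>s. \<Sum>m\<in>Ms. \<beta> m * (h s * P m s))"
    proof -
      have i1': "(\<lambda>s. \<sigma> ^ (k + 1) * (if s \<in> {x..y} then h s else 0)) integrable_on {0..1}"
        by (rule integrable_on_mult_right[OF i1])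
      have i3: "(\<lambda>s. \<Sum>m\<in>Ms. \<beta> m * (h s * P m s)) integrable_on {0..1}"
        by (intro integrable_sum Ms_finite integrable_on_mult_right i2)
      show ?thesis unfolding R_def by (rule integral_diff[OF i1' i3])
    qed
    also have "\<dots> = \<sigma> ^ (k + 1) * integral {0..1} (\<lambda>s. if s \<in> {x..y} then h s else 0)
      - (\<Sum>m\<in>Ms. \<beta> m * integral {0..1} (\<lambda>s. h s * P m s))"
      by (subst integral_sum) (auto intro!: integrable_on_mult_right i1 i2 simp: Ms_finite)
    finally show ?thesis .
  qed
  also have "integral {0..1} (\<lambda>s. if s \<in> {x..y} then h s else 0) = integral {x..y} h"
  proof -
    have "{x..y} \<inter> {0..1} = {x..y}" using xy by auto
    then show ?thesis by (simp only: Henstock_Kurzweil_Integration.integral_restrict_Int)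
  qed
  also have "integral {x..y} h = g (k - 1) y - g (k - 1) x"
    by (rule g_top_diff) (use xy in auto)
  finally have "\<sigma> ^ (k + 1) * (g (k - 1) y - g (k - 1) x) = (\<Sum>m\<in>Ms. \<beta> m * cc m)"
    using crit0 by (simp add: cc_def P_def)
  then show ?thesis by (simp add: \<beta> mult.commute)
qed

end



lemma kinv:
  fixes K D R :: real
  assumes a: "K * K = 1" "K * D = R"
  shows "D = K * R"
proof -
  have "D = (K * K) * D" using a by simp
  also have "\<dots> = K * (K * D)" by (simp only: mult.assoc)
  finally show ?thesis using a by simp
qed

context crit_setup
begin

definition Tr :: "real \<Rightarrow> nat \<Rightarrow> real \<Rightarrow> real" where
  "Tr \<sigma> r s = (\<Sum>m\<in>Ms. cc m * tp r (\<sigma> * (t m - s)))"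

lemma tp_rev_deriv:
  assumes "\<sigma> * \<sigma> = 1" "2 \<le> r"
  shows "((\<lambda>s. tp r (\<sigma> * (c - s))) has_real_derivative - \<sigma> * tp (r - 1) (\<sigma> * (c - s))) (at s)"
proof -
  have "((\<lambda>s. tp r (\<sigma> * (c - s))) has_real_derivative tp (r - 1) (\<sigma> * (c - s)) * (\<sigma> * (0 - 1))) (at s)"
    by (rule DERIV_chain2[where g="\<lambda>s. \<sigma> * (c - s)", OF tp_deriv]) (use assms in \<open>auto intro!: derivative_eq_intros\<close>)
  then show ?thesis by (simp add: mult.commute)
qed

lemma Tr_deriv:
  assumes "\<sigma> * \<sigma> = 1" "2 \<le> r"
  shows "(Tr \<sigma> r has_real_derivative - \<sigma> * Tr \<sigma> (r - 1) s) (at s)"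
proof -
  have "((\<lambda>s. \<Sum>m\<in>Ms. cc m * tp r (\<sigma> * (t m - s))) has_real_derivative
      (\<Sum>m\<in>Ms. cc m * (- \<sigma> * tp (r - 1) (\<sigma> * (t m - s))))) (at s)"
    by (intro DERIV_sum DERIV_cmult tp_rev_deriv assms)
  moreover have "(\<Sum>m\<in>Ms. cc m * (- \<sigma> * tp (r - 1) (\<sigma> * (t m - s)))) = - \<sigma> * Tr \<sigma> (r - 1) s"
    by (simp add: Tr_def sum_distrib_left mult.left_commute)
  ultimately show ?thesis by (simp add: Tr_def[abs_def])
qed

definition Sd :: "real \<Rightarrow> real set" where
  "Sd \<sigma> = {s \<in> {0..1}. 0 \<le> \<sigma> * (s - t j)}"

lemma a_Sd: "t j \<in> Sd \<sigma>"
  using t_range jN by (simp add: Sd_def)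

lemma Sd_conv:
  assumes s: "\<sigma> * \<sigma> = 1" and "x \<in> Sd \<sigma>" "y \<in> Sd \<sigma>" "x \<le> u" "u \<le> y"
  shows "u \<in> Sd \<sigma>"
  using sigma_cases[OF s] assms by (auto simp: Sd_def)

lemma top_rep:
  assumes s: "\<sigma> * \<sigma> = 1" and sS: "s \<in> Sd \<sigma>"
  shows "g (k - 1) s = g (k - 1) (t j) + \<sigma> ^ (k + 1) * (Tr \<sigma> k (t j) - Tr \<sigma> k s)"
proof -
  have kk: "\<sigma> ^ (k + 1) * \<sigma> ^ (k + 1) = 1"
    by (metis assms(1) power_mult_distrib power_one)
  have sumeq: "(\<Sum>m\<in>Ms. (tp k (\<sigma> * (t m - x)) - tp k (\<sigma> * (t m - y))) * cc m) = Tr \<sigma> k x - Tr \<sigma> k y" for x y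
    by (simp add: Tr_def sum_subtractf[symmetric] algebra_simps)
  have tj: "t j \<in> {0..1}" using t_range jN by simp
  consider "s = t j" | "t j < s" | "s < t j" by linarith
  then show ?thesis
  proof cases
    case 1 then show ?thesis by simp
  next
    case 2
    then have "\<sigma> = 1" using sigma_cases[OF s] sS by (auto simp: Sd_def)
    have "\<sigma> ^ (k + 1) * (g (k - 1) s - g (k - 1) (t j)) = (\<Sum>m\<in>Ms. (tp k (\<sigma> * (t m - t j)) - tp k (\<sigma> * (t m - s))) * cc m)"
      by (rule key_identity[OF s 2]) (use tj sS in \<open>auto simp: Sd_def\<close>)
    then have "\<sigma> ^ (k + 1) * (g (k - 1) s - g (k - 1) (t j)) = Tr \<sigma> k (t j) - Tr \<sigma> k s"
      unfolding sumeq .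
    from kinv[OF kk this] show ?thesis by simp
  next
    case 3
    then have "\<sigma> = -1" using sigma_cases[OF s] sS by (auto simp: Sd_def)
    have "\<sigma> ^ (k + 1) * (g (k - 1) (t j) - g (k - 1) s) = (\<Sum>m\<in>Ms. (tp k (\<sigma> * (t m - s)) - tp k (\<sigma> * (t m - t j))) * cc m)"
      by (rule key_identity[OF s 3]) (use tj sS in \<open>auto simp: Sd_def\<close>)
    then have "\<sigma> ^ (k + 1) * (g (k - 1) (t j) - g (k - 1) s) = Tr \<sigma> k s - Tr \<sigma> k (t j)"
      unfolding sumeq .
    from kinv[OF kk this] have "g (k - 1) (t j) - g (k - 1) s = \<sigma> ^ (k + 1) * (Tr \<sigma> k s - Tr \<sigma> k (t j))" .
    then show ?thesis by (simp add: algebra_simps)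
  qed
qed

end



context crit_setup
begin

definition Ec :: "real \<Rightarrow> nat \<Rightarrow> real" where
  "Ec \<sigma> l = - (\<sigma> ^ (k + 1)) * (- \<sigma>) ^ (k - 1 - l)"

definition Phi :: "real \<Rightarrow> nat \<Rightarrow> real \<Rightarrow> real" where
  "Phi \<sigma> l s = g l s - Ec \<sigma> l * Tr \<sigma> (2 * k - 1 - l) s"

definition Tay :: "nat \<Rightarrow> (nat \<Rightarrow> real) \<Rightarrow> real \<Rightarrow> real" where
  "Tay n c s = (\<Sum>i<n. c i * (s - t j) ^ i / fact i)"

lemma Tay_deriv: "(Tay (Suc n) c has_real_derivative Tay n (\<lambda>i. c (Suc i)) s) (at s)"
proof -
  have eq: "Tay (Suc n) c = (\<lambda>s. c 0 + (\<Sum>i<n. c (Suc i) * (s - t j) ^ Suc i / fact (Suc i)))"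
    unfolding Tay_def by (rule ext, subst sum.lessThan_Suc_shift) (simp del: fact_Suc power_Suc)
  have trm: "((\<lambda>s. c (Suc i) * (s - t j) ^ Suc i / fact (Suc i)) has_real_derivative
      c (Suc i) * (s - t j) ^ i / fact i) (at s)" for i
  proof -
    have p: "((\<lambda>s. (s - t j) ^ Suc i) has_real_derivative (1 + of_nat i) * (1 * (s - t j) ^ i)) (at s)"
      by (rule DERIV_power_Suc) (auto intro!: derivative_eq_intros)
    have "((\<lambda>s. c (Suc i) * (s - t j) ^ Suc i / fact (Suc i)) has_real_derivative
      c (Suc i) * ((1 + of_nat i) * (1 * (s - t j) ^ i)) / fact (Suc i)) (at s)"
      by (intro DERIV_cdivide DERIV_cmult p)
    moreover have "c (Suc i) * ((1 + of_nat i) * (1 * (s - t j) ^ i)) / fact (Suc i) = c (Suc i) * (s - t j) ^ i / fact i"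
      by (simp add: fact_Suc field_simps del: of_nat_Suc) (simp add: algebra_simps)
    ultimately show ?thesis by simp
  qed
  have "((\<lambda>s. c 0 + (\<Sum>i<n. c (Suc i) * (s - t j) ^ Suc i / fact (Suc i))) has_real_derivative
     0 + (\<Sum>i<n. c (Suc i) * (s - t j) ^ i / fact i)) (at s)"
    by (intro DERIV_add DERIV_const DERIV_sum trm)
  then show ?thesis by (simp add: eq Tay_def)
qed

lemma Tay_at: "Tay (Suc n) c (t j) = c 0"
  unfolding Tay_def by (simp add: sum.lessThan_Suc_shift del: fact_Suc)

lemma g_diff:
  assumes "l < k" "0 \<le> x" "x \<le> y" "y \<le> 1"
  shows "(g (Suc l) has_integral (g l y - g l x)) {x..y}"
proof -
  have iy: "g (Suc l) integrable_on {0..y}"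
    using integrable_on_subinterval[OF schain_int[OF sch assms(1)], of 0 y] assms by simp
  have ky: "g l y = g l 0 + integral {0..y} (g (Suc l))"
    using schain_eq[OF sch assms(1), of y] assms by simp
  have kx: "g l x = g l 0 + integral {0..x} (g (Suc l))"
    using schain_eq[OF sch assms(1), of x] assms by simp
  have "integral {0..x} (g (Suc l)) + integral {x..y} (g (Suc l)) = integral {0..y} (g (Suc l))"
    by (rule Henstock_Kurzweil_Integration.integral_combine) (use assms iy in auto)
  then have "integral {x..y} (g (Suc l)) = g l y - g l x" using kx ky by simp
  moreover have "g (Suc l) integrable_on {x..y}"
    using integrable_on_subinterval[OF iy, of x y] assms by simp
  ultimately show ?thesis by (metis has_integral_integral)
qed

lemma Ec_step:
  assumes s: "\<sigma> * \<sigma> = 1" and l: "Suc l < k"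
  shows "Ec \<sigma> l * (- \<sigma>) = Ec \<sigma> (Suc l)"
proof -
  have "k - 1 - l = Suc (k - 1 - Suc l)" using l by simp
  then have "Ec \<sigma> l = - (\<sigma> ^ (k + 1)) * ((- \<sigma>) ^ (k - 1 - Suc l) * (- \<sigma>))"
    unfolding Ec_def by (simp only: power_Suc2)
  then have "Ec \<sigma> l * (- \<sigma>) = - (\<sigma> ^ (k + 1)) * (- \<sigma>) ^ (k - 1 - Suc l) * (\<sigma> * \<sigma>)"
    by (simp add: algebra_simps)
  then show ?thesis using s by (simp add: Ec_def)
qed

lemma Phi_int:
  assumes s: "\<sigma> * \<sigma> = 1" and l: "Suc l < k" and xy: "0 \<le> x" "x \<le> y" "y \<le> 1"
  shows "(Phi \<sigma> (Suc l) has_integral (Phi \<sigma> l y - Phi \<sigma> l x)) {x..y}"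
proof -
  have r2: "2 \<le> 2 * k - 1 - l" using l by simp
  have r1: "2 * k - 1 - l - 1 = 2 * k - 1 - Suc l" by simp
  have d0: "((\<lambda>s. Ec \<sigma> l * Tr \<sigma> (2 * k - 1 - l) s) has_real_derivative
        Ec \<sigma> l * (- \<sigma> * Tr \<sigma> (2 * k - 1 - l - 1) u)) (at u)" for u
    by (intro DERIV_cmult Tr_deriv[OF s r2])
  have e: "Ec \<sigma> l * (- \<sigma> * Tr \<sigma> (2 * k - 1 - l - 1) u) = Ec \<sigma> (Suc l) * Tr \<sigma> (2 * k - 1 - Suc l) u" for u
    using Ec_step[OF s l] r1 by (metis mult.assoc)
  have d: "((\<lambda>s. Ec \<sigma> l * Tr \<sigma> (2 * k - 1 - l) s) has_vector_derivative
        Ec \<sigma> (Suc l) * Tr \<sigma> (2 * k - 1 - Suc l) u) (at u within {x..y})" for u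
    using d0[of u] unfolding e has_real_derivative_iff_has_vector_derivative
    by (rule has_vector_derivative_at_within)
  have i2: "((\<lambda>u. Ec \<sigma> (Suc l) * Tr \<sigma> (2 * k - 1 - Suc l) u) has_integral
      (Ec \<sigma> l * Tr \<sigma> (2 * k - 1 - l) y - Ec \<sigma> l * Tr \<sigma> (2 * k - 1 - l) x)) {x..y}"
    by (rule fundamental_theorem_of_calculus[OF xy(2)]) (use d in auto)
  have i1: "(g (Suc l) has_integral (g l y - g l x)) {x..y}"
    by (rule g_diff) (use l xy in auto)
  have "((\<lambda>u. g (Suc l) u - Ec \<sigma> (Suc l) * Tr \<sigma> (2 * k - 1 - Suc l) u) has_integral
       ((g l y - g l x) - (Ec \<sigma> l * Tr \<sigma> (2 * k - 1 - l) y - Ec \<sigma> l * Tr \<sigma> (2 * k - 1 - l) x))) {x..y}"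
    by (rule has_integral_diff[OF i1 i2])
  then show ?thesis by (simp add: Phi_def[abs_def] algebra_simps)
qed

lemma Phi_tay:
  assumes s: "\<sigma> * \<sigma> = 1"
  shows "d < k \<Longrightarrow> u \<in> Sd \<sigma> \<Longrightarrow> Phi \<sigma> (k - 1 - d) u = Tay (Suc d) (\<lambda>i. Phi \<sigma> (k - 1 - d + i) (t j)) u"
proof (induction d arbitrary: u)
  case 0
  have "2 * k - 1 - (k - 1) = k" using k1 by simp
  then have "Phi \<sigma> (k - 1) u = g (k - 1) u + \<sigma> ^ (k + 1) * Tr \<sigma> k u"
    "Phi \<sigma> (k - 1) (t j) = g (k - 1) (t j) + \<sigma> ^ (k + 1) * Tr \<sigma> k (t j)"
    by (simp_all add: Phi_def Ec_def)
  then have "Phi \<sigma> (k - 1) u = Phi \<sigma> (k - 1) (t j)"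
    using top_rep[OF s 0(2)] by (simp add: algebra_simps)
  then show ?case by (simp add: Tay_def)
next
  case (Suc d)
  define l where "l = k - 1 - Suc d"
  have l: "Suc l < k" "k - 1 - d = Suc l" using Suc.prems(1) by (auto simp: l_def)
  define c where "c i = Phi \<sigma> (l + i) (t j)" for i
  define A where "A = Tay (Suc (Suc d)) c"
  have IH: "Phi \<sigma> (Suc l) v = Tay (Suc d) (\<lambda>i. c (Suc i)) v" if "v \<in> Sd \<sigma>" for v
  proof -
    have "Phi \<sigma> (k - 1 - d) v = Tay (Suc d) (\<lambda>i. Phi \<sigma> (k - 1 - d + i) (t j)) v"
      using Suc.IH[OF _ that] Suc.prems(1) by simp
    then show ?thesis unfolding l(2) by (simp add: c_def)
  qed
  have dA: "(A has_real_derivative Tay (Suc d) (\<lambda>i. c (Suc i)) v) (at v)" for v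
    unfolding A_def by (rule Tay_deriv)
  have Aint: "(Tay (Suc d) (\<lambda>i. c (Suc i)) has_integral (A y - A x)) {x..y}" if "x \<le> y" for x y
    by (rule fundamental_theorem_of_calculus[OF that])
       (use dA in \<open>auto simp: has_real_derivative_iff_has_vector_derivative intro: has_vector_derivative_at_within\<close>)
  have incr: "Phi \<sigma> l y - Phi \<sigma> l x = A y - A x" if xy: "x \<in> Sd \<sigma>" "y \<in> Sd \<sigma>" "x \<le> y" for x y
  proof -
    have "(Phi \<sigma> (Suc l) has_integral (Phi \<sigma> l y - Phi \<sigma> l x)) {x..y}"
      by (rule Phi_int[OF s l(1)]) (use xy in \<open>auto simp: Sd_def\<close>)
    moreover have "(Phi \<sigma> (Suc l) has_integral (A y - A x)) {x..y}"
    proof (rule has_integral_eq[OF _ Aint[OF xy(3)]])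
      fix v assume "v \<in> {x..y}"
      then have "v \<in> Sd \<sigma>" using Sd_conv[OF s xy(1,2)] by auto
      then show "Tay (Suc d) (\<lambda>i. c (Suc i)) v = Phi \<sigma> (Suc l) v" using IH by simp
    qed
    ultimately show ?thesis by (rule has_integral_unique)
  qed
  have Aa: "A (t j) = Phi \<sigma> l (t j)" by (simp add: A_def Tay_at c_def)
  have "Phi \<sigma> l u = A u"
  proof (cases "u \<le> t j")
    case True
    then show ?thesis using incr[OF Suc.prems(2) a_Sd True] Aa by simp
  next
    case False
    then show ?thesis using incr[OF a_Sd Suc.prems(2)] Aa by simp
  qed
  moreover have "k - 1 - Suc d = l" by (simp add: l_def)
  ultimately show ?case by (simp add: A_def c_def[abs_def])
qed

lemma Tay_poly: "\<exists>p. degree p \<le> n - 1 \<and> (\<forall>s. Tay n c s = poly p s)"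
proof (intro exI conjI allI)
  let ?p = "\<Sum>i<n. smult (c i / fact i) ([:- t j, 1:] ^ i)"
  show "degree ?p \<le> n - 1"
  proof (rule degree_sum_le)
    fix i assume "i \<in> {..<n}"
    then have "degree ([:- t j, 1:] ^ i) \<le> n - 1" by (simp add: degree_linear_power)
    then show "degree (smult (c i / fact i) ([:- t j, 1:] ^ i)) \<le> n - 1"
      using degree_smult_le order_trans by blast
  qed simp
  fix s show "Tay n c s = poly ?p s"
    by (simp add: Tay_def poly_sum)
qed

lemma side_rep:
  assumes s: "\<sigma> * \<sigma> = 1"
  shows "\<exists>p. degree p \<le> k - 1 \<and> (\<forall>u\<in>Sd \<sigma>. \<gamma> u = poly p u + Ec \<sigma> 0 * Tr \<sigma> (2 * k - 1) u)"
proof -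
  obtain p where p: "degree p \<le> k - 1" "\<And>u. Tay k (\<lambda>i. Phi \<sigma> i (t j)) u = poly p u"
    using Tay_poly[of k "\<lambda>i. Phi \<sigma> i (t j)"] by auto
  show ?thesis
  proof (intro exI conjI ballI)
    show "degree p \<le> k - 1" by fact
    fix u assume u: "u \<in> Sd \<sigma>"
    have "Phi \<sigma> 0 u = Tay k (\<lambda>i. Phi \<sigma> i (t j)) u"
      using Phi_tay[OF s, of "k - 1" u] u k1 by simp
    moreover have "u \<in> {0..1}" using u by (simp add: Sd_def)
    ultimately show "\<gamma> u = poly p u + Ec \<sigma> 0 * Tr \<sigma> (2 * k - 1) u"
      using p(2) g0[of u] by (simp add: Phi_def)
  qed
qed

end



lemma Ck_on_cong:
  assumes eq: "\<And>x. x \<in> S \<Longrightarrow> f x = g x" and C: "Ck_on m S f"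
  shows "Ck_on m S g"
  unfolding Ck_on_def
proof (intro conjI allI impI ballI)
  fix n x assume n: "n < m" and x: "x \<in> S"
  have "(ider n S f has_vector_derivative ider (Suc n) S f x) (at x within S)"
    using C n x by (auto simp: Ck_on_def)
  then have "(ider n S g has_vector_derivative ider (Suc n) S f x) (at x within S)"
    by (rule has_vector_derivative_transform_within[of _ _ _ _ 1]) (use x ider_cong[OF eq] in auto)
  then show "(ider n S g has_vector_derivative ider (Suc n) S g x) (at x within S)"
    using ider_cong[OF eq x, where n="Suc n"] by simp
next
  have "continuous_on S (ider m S f)" using C by (auto simp: Ck_on_def)
  then show "continuous_on S (ider m S g)"
    by (rule continuous_on_eq) (use ider_cong[OF eq] in auto)
qed

lemma smooth_on_cong:
  assumes eq: "\<And>x. x \<in> S \<Longrightarrow> f x = g x" and C: "smooth_on S f"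
  shows "smooth_on S g"
  using Ck_on_cong[OF eq] C by (auto simp: smooth_on_def)

context crit_setup
begin

definition Fn :: "real \<Rightarrow> real poly \<Rightarrow> nat \<Rightarrow> real \<Rightarrow> real" where
  "Fn \<sigma> p n s = poly ((pderiv ^^ n) p) s + Ec \<sigma> 0 * (- \<sigma>) ^ n * Tr \<sigma> (2 * k - 1 - n) s"

lemma Fn_deriv:
  assumes s: "\<sigma> * \<sigma> = 1" and n: "n < 2 * k - 2"
  shows "(Fn \<sigma> p n has_vector_derivative Fn \<sigma> p (Suc n) x) (at x within S)"
proof -
  have r: "2 \<le> 2 * k - 1 - n" using n by simp
  have "((\<lambda>s. poly ((pderiv ^^ n) p) s + Ec \<sigma> 0 * (- \<sigma>) ^ n * Tr \<sigma> (2 * k - 1 - n) s) has_real_derivative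
      poly (pderiv ((pderiv ^^ n) p)) x + Ec \<sigma> 0 * (- \<sigma>) ^ n * (- \<sigma> * Tr \<sigma> (2 * k - 1 - n - 1) x)) (at x)"
    by (intro DERIV_add poly_DERIV DERIV_cmult Tr_deriv[OF s r])
  moreover have "2 * k - 1 - n - 1 = 2 * k - 1 - Suc n" by simp
  ultimately have "(Fn \<sigma> p n has_real_derivative Fn \<sigma> p (Suc n) x) (at x)"
    by (simp add: Fn_def[abs_def] algebra_simps)
  then show ?thesis
    by (simp add: has_real_derivative_iff_has_vector_derivative has_vector_derivative_at_within)
qed

lemma Tr_cont:
  assumes "0 < r"
  shows "continuous_on S (Tr \<sigma> r)"
proof -
  have "continuous_on S (\<lambda>s. \<Sum>m\<in>Ms. cc m * tp r (\<sigma> * (t m - s)))"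
    by (intro continuous_intros continuous_on_compose2[OF tp_cont[OF assms, of UNIV]]) auto
  then show ?thesis by (simp add: Tr_def[abs_def])
qed

lemma Fn_cont:
  assumes "n \<le> 2 * k - 2"
  shows "continuous_on S (Fn \<sigma> p n)"
proof -
  have r: "0 < 2 * k - 1 - n" using assms k1 by simp
  have "continuous_on S (\<lambda>s. poly ((pderiv ^^ n) p) s + Ec \<sigma> 0 * (- \<sigma>) ^ n * Tr \<sigma> (2 * k - 1 - n) s)"
    by (intro continuous_intros Tr_cont[OF r, unfolded continuous_on_eq_continuous_within, rule_format])
       (use Tr_cont[OF r] in \<open>auto simp: continuous_on_eq_continuous_within\<close>)
  then show ?thesis by (simp add: Fn_def[abs_def])
qed

lemma Sd_pos: "Sd 1 = {t j..1}"
  using t_range[OF jN] by (auto simp: Sd_def)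

lemma Sd_neg: "Sd (-1) = {0..t j}"
  using t_range[OF jN] by (auto simp: Sd_def)

lemma side_Ck:
  assumes s: "\<sigma> * \<sigma> = 1" and S: "Sd \<sigma> = {c..d}" and cd: "c \<le> d"
  shows "Ck_on (2 * k - 2) {c..d} \<gamma>"
proof (cases "c = d")
  case True then show ?thesis by (rule Ck_singleton')
next
  case False
  then have cd': "c < d" using cd by simp
  obtain p where p: "degree p \<le> k - 1" "\<And>u. u \<in> Sd \<sigma> \<Longrightarrow> \<gamma> u = poly p u + Ec \<sigma> 0 * Tr \<sigma> (2 * k - 1) u"
    using side_rep[OF s] by blast
  show ?thesis
  proof (rule Ck_chain[of c d "Fn \<sigma> p" \<gamma>, OF cd'])
    show "\<And>x. x \<in> {c..d} \<Longrightarrow> Fn \<sigma> p 0 x = \<gamma> x" using p(2) S by (simp add: Fn_def)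
    show "\<And>n x. n < 2 * k - 2 \<Longrightarrow> x \<in> {c..d} \<Longrightarrow> (Fn \<sigma> p n has_vector_derivative Fn \<sigma> p (Suc n) x) (at x within {c..d})"
      using Fn_deriv[OF s] by blast
    show "continuous_on {c..d} (Fn \<sigma> p (2 * k - 2))" by (rule Fn_cont) simp
  qed
qed

lemma side_boundary:
  assumes s: "\<sigma> * \<sigma> = 1" and S: "Sd \<sigma> = {c..d}" and cd: "c < d" and e: "e \<in> {c..d}"
    and ez: "\<And>m. m \<le> N \<Longrightarrow> \<sigma> * (t m - e) \<le> 0"
    and l: "l \<in> {1..k - 1}"
  shows "ider (k + l - 1) {c..d} \<gamma> e = 0"
proof -
  obtain p where p: "degree p \<le> k - 1" "\<And>u. u \<in> Sd \<sigma> \<Longrightarrow> \<gamma> u = poly p u + Ec \<sigma> 0 * Tr \<sigma> (2 * k - 1) u"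
    using side_rep[OF s] by blast
  have n: "k + l - 1 \<le> 2 * k - 2" "k \<le> k + l - 1" using l by auto
  have "ider (k + l - 1) {c..d} \<gamma> e = Fn \<sigma> p (k + l - 1) e"
  proof (rule ider_chain[of c d "Fn \<sigma> p" \<gamma> "2 * k - 2", OF cd])
    show "\<And>x. x \<in> {c..d} \<Longrightarrow> Fn \<sigma> p 0 x = \<gamma> x" using p(2) S by (simp add: Fn_def)
    show "\<And>n x. n < 2 * k - 2 \<Longrightarrow> x \<in> {c..d} \<Longrightarrow> (Fn \<sigma> p n has_vector_derivative Fn \<sigma> p (Suc n) x) (at x within {c..d})"
      using Fn_deriv[OF s] by blast
  qed (use n e in auto)
  moreover have "(pderiv ^^ (k + l - 1)) p = 0"
    by (rule pderiv_iter_zero) (use p(1) n k1 in auto)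
  moreover have "Tr \<sigma> (2 * k - 1 - (k + l - 1)) e = 0"
    unfolding Tr_def using ez by (intro sum.neutral) (auto simp: Ms_def)
  ultimately show ?thesis by (simp add: Fn_def)
qed

end



context crit_setup
begin

lemma piece_poly:
  assumes i: "i \<in> {1..N}"
  shows "\<exists>q. degree q \<le> 2 * k - 1 \<and> (\<forall>s\<in>{t (i - 1)..t i}. \<gamma> s = poly q s)"
proof -
  define \<sigma> :: real where "\<sigma> = (if i \<le> j then -1 else 1)"
  have s: "\<sigma> * \<sigma> = 1" by (simp add: \<sigma>_def)
  have iN: "i - 1 < N" "i \<le> N" using i by auto
  have ti: "t (i - 1) < t i" using tinc[OF iN(1)] i by simp
  have sub: "{t (i - 1)..t i} \<subseteq> Sd \<sigma>"
  proof (cases "i \<le> j")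
    case True
    then have "t i \<le> t j" using t_mono_le jN by blast
    moreover have "0 \<le> t (i - 1)" using t_range[of "i - 1"] iN by simp
    ultimately show ?thesis using True by (auto simp: \<sigma>_def Sd_neg)
  next
    case False
    then have "t j \<le> t (i - 1)" using t_mono_le[of j "i - 1"] iN by simp
    moreover have "t i \<le> 1" using t_range[of i] iN by simp
    ultimately show ?thesis using False by (auto simp: \<sigma>_def Sd_pos)
  qed
  obtain p where p: "degree p \<le> k - 1" "\<And>u. u \<in> Sd \<sigma> \<Longrightarrow> \<gamma> u = poly p u + Ec \<sigma> 0 * Tr \<sigma> (2 * k - 1) u"
    using side_rep[OF s] by blast
  define r where "r = 2 * k - 1"
  have r0: "0 < r" using k1 by (simp add: r_def)
  define sg where "sg m = (0 \<le> \<sigma> * (t m - t (i - 1)) \<and> 0 \<le> \<sigma> * (t m - t i))" for m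
  define PT where "PT m = (if sg m then smult (1 / fact r) ([:\<sigma> * t m, - \<sigma>:] ^ r) else 0)" for m
  have tpeq: "tp r (\<sigma> * (t m - s)) = poly (PT m) s" if m: "m \<le> N" and sI: "s \<in> {t (i - 1)..t i}" for m s
  proof -
    have pl: "poly (smult (1 / fact r) ([:\<sigma> * t m, - \<sigma>:] ^ r)) s = (\<sigma> * (t m - s)) ^ r / fact r"
      by (simp add: algebra_simps)
    consider "m \<le> i - 1" | "i \<le> m" by linarith
    then show ?thesis
    proof cases
      case 1
      then have tm: "t m \<le> t (i - 1)" using t_mono_le iN by simp
      show ?thesis
      proof (cases "i \<le> j")
        case True
        then have "\<sigma> = -1" by (simp add: \<sigma>_def)
        then have "sg m" "0 \<le> \<sigma> * (t m - s)" using tm ti sI by (auto simp: sg_def)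
        then show ?thesis using pl tp_pos[OF _ r0] by (simp add: PT_def)
      next
        case False
        then have "\<sigma> = 1" by (simp add: \<sigma>_def)
        then have "\<not> sg m" "\<sigma> * (t m - s) \<le> 0" using tm ti sI by (auto simp: sg_def)
        then show ?thesis by (simp add: PT_def)
      qed
    next
      case 2
      then have tm: "t i \<le> t m" using t_mono_le m by simp
      show ?thesis
      proof (cases "i \<le> j")
        case True
        then have "\<sigma> = -1" by (simp add: \<sigma>_def)
        then have "\<not> sg m" "\<sigma> * (t m - s) \<le> 0" using tm ti sI by (auto simp: sg_def)
        then show ?thesis by (simp add: PT_def)
      next
        case False
        then have "\<sigma> = 1" by (simp add: \<sigma>_def)
        then have "sg m" "0 \<le> \<sigma> * (t m - s)" using tm ti sI by (auto simp: sg_def)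
        then show ?thesis using pl tp_pos[OF _ r0] by (simp add: PT_def)
      qed
    qed
  qed
  define q where "q = p + smult (Ec \<sigma> 0) (\<Sum>m\<in>Ms. smult (cc m) (PT m))"
  show ?thesis
  proof (intro exI conjI ballI)
    have dPT: "degree (smult (cc m) (PT m)) \<le> 2 * k - 1" for m
    proof -
      have d1: "degree [:\<sigma> * t m, - \<sigma>:] \<le> 1" by (simp add: degree_pCons_eq_if)
      have "degree ([:\<sigma> * t m, - \<sigma>:] ^ r) \<le> degree [:\<sigma> * t m, - \<sigma>:] * r"
        by (rule degree_power_le)
      also have "\<dots> \<le> 1 * r" using d1 by (rule mult_right_mono) simp
      finally have "degree ([:\<sigma> * t m, - \<sigma>:] ^ r) \<le> r" by simp
      then have "degree (PT m) \<le> r" unfolding PT_def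
        using degree_smult_le order_trans by (auto simp: PT_def)
      then show ?thesis using degree_smult_le order_trans r_def by metis
    qed
    have "degree (\<Sum>m\<in>Ms. smult (cc m) (PT m)) \<le> 2 * k - 1"
      by (rule degree_sum_le[OF Ms_finite dPT])
    then have "degree (smult (Ec \<sigma> 0) (\<Sum>m\<in>Ms. smult (cc m) (PT m))) \<le> 2 * k - 1"
      using degree_smult_le order_trans by blast
    moreover have "degree p \<le> 2 * k - 1" using p(1) by simp
    ultimately show "degree q \<le> 2 * k - 1" unfolding q_def
      using degree_add_le by blast
  next
    fix s assume sI: "s \<in> {t (i - 1)..t i}"
    have "Tr \<sigma> (2 * k - 1) s = (\<Sum>m\<in>Ms. cc m * poly (PT m) s)"
      unfolding Tr_def r_def[symmetric] using tpeq sI by (intro sum.cong refl) (auto simp: Ms_def)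
    then show "\<gamma> s = poly q s"
      using p(2)[of s] sub sI by (auto simp: q_def poly_sum)
  qed
qed

end

theorem proposition4p2:
  fixes k N j :: nat and t p v :: "nat \<Rightarrow> real" and \<gamma> :: "real \<Rightarrow> real"
  assumes "k \<ge> 1" and "N \<ge> 1"
    and "t 0 = 0" and "t N = 1" and "\<And>i. i < N \<Longrightarrow> t i < t (Suc i)"
    and "j \<le> N"
    and "\<gamma> \<in> Gamma_k k N t p v j"
    and "\<forall>\<xi>\<in>V_k k N t j. integral {0..1} (\<lambda>s. D01 k \<gamma> s * D01 k \<xi> s) = 0"
  shows "(\<forall>i\<in>{1..N}. smooth_on {t (i-1)..t i} \<gamma>
            \<and> (\<forall>s\<in>{t (i-1)..t i}. ider (2*k) {t (i-1)..t i} \<gamma> s = 0))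
       \<and> Ck_on (2*k-2) {0..t j} \<gamma> \<and> Ck_on (2*k-2) {t j..1} \<gamma>
       \<and> (t j \<noteq> 0 \<longrightarrow> (\<forall>l\<in>{1..k-1}. ider (k+l-1) {0..t j} \<gamma> 0 = 0))
       \<and> (t j \<noteq> 1 \<longrightarrow> (\<forall>l\<in>{1..k-1}. ider (k+l-1) {t j..1} \<gamma> 1 = 0))"
proof -
  have "\<gamma> \<in> sobolev_H k" using assms(7) by (simp add: Gamma_k_def)
  then obtain g where g: "\<And>s. s \<in> {0..1} \<Longrightarrow> g 0 s = \<gamma> s" "schain k g"
    "g k absolutely_integrable_on {0..1}"
    by (rule sobolev_HE) blast
  interpret crit_setup k N j t \<gamma> g
    by unfold_locales (use assms g in auto)
  have tj: "0 \<le> t j" "t j \<le> 1" using t_range[OF jN] by auto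
  have P1: "\<forall>i\<in>{1..N}. smooth_on {t (i-1)..t i} \<gamma>
            \<and> (\<forall>s\<in>{t (i-1)..t i}. ider (2*k) {t (i-1)..t i} \<gamma> s = 0)"
  proof
    fix i assume i: "i \<in> {1..N}"
    obtain q where q: "degree q \<le> 2 * k - 1" "\<And>s. s \<in> {t (i - 1)..t i} \<Longrightarrow> \<gamma> s = poly q s"
      using piece_poly[OF i] by blast
    have i1: "i - 1 < N" "Suc (i - 1) = i" using i by auto
    have ti: "t (i - 1) < t i" using tinc[OF i1(1)] unfolding i1(2) .
    have "smooth_on {t (i-1)..t i} (poly q)" by (rule smooth_poly[OF ti])
    then have "smooth_on {t (i-1)..t i} \<gamma>"
      by (rule smooth_on_cong[rotated]) (use q(2) in simp)
    moreover have "ider (2*k) {t (i-1)..t i} \<gamma> s = 0" if s: "s \<in> {t (i-1)..t i}" for s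
    proof -
      have "ider (2*k) {t (i-1)..t i} \<gamma> s = ider (2*k) {t (i-1)..t i} (poly q) s"
        by (rule ider_cong[OF _ s]) (use q(2) in simp)
      also have "\<dots> = poly ((pderiv ^^ (2 * k)) q) s" by (rule ider_poly[OF ti s])
      also have "(pderiv ^^ (2 * k)) q = 0" by (rule pderiv_iter_zero) (use q(1) k1 in simp)
      finally show ?thesis by simp
    qed
    ultimately show "smooth_on {t (i-1)..t i} \<gamma> \<and> (\<forall>s\<in>{t (i-1)..t i}. ider (2*k) {t (i-1)..t i} \<gamma> s = 0)"
      by blast
  qed
  have m1: "(-1::real) * -1 = 1" by simp
  have one: "(1::real) * 1 = 1" by simp
  have P2: "Ck_on (2*k-2) {0..t j} \<gamma>" by (rule side_Ck[OF m1 Sd_neg tj(1)])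
  have P3: "Ck_on (2*k-2) {t j..1} \<gamma>" by (rule side_Ck[OF one Sd_pos tj(2)])
  have P4: "t j \<noteq> 0 \<longrightarrow> (\<forall>l\<in>{1..k-1}. ider (k+l-1) {0..t j} \<gamma> 0 = 0)"
  proof (intro impI ballI)
    fix l assume "t j \<noteq> 0" "l \<in> {1..k-1}"
    then show "ider (k+l-1) {0..t j} \<gamma> 0 = 0"
      using side_boundary[OF m1 Sd_neg, of 0 l] tj t_range by auto
  qed
  have P5: "t j \<noteq> 1 \<longrightarrow> (\<forall>l\<in>{1..k-1}. ider (k+l-1) {t j..1} \<gamma> 1 = 0)"
  proof (intro impI ballI)
    fix l assume "t j \<noteq> 1" "l \<in> {1..k-1}"
    then show "ider (k+l-1) {t j..1} \<gamma> 1 = 0"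
      using side_boundary[OF one Sd_pos, of 1 l] tj t_range by auto
  qed
  show ?thesis using P1 P2 P3 P4 P5 by blast
qed


end
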